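(* Let $c\ge 2$ and let $G$ be a $c$-edge-colored graph. Then $G$ is PC acyclic of type 1 if and only if $G$ has no PC cycle.
   Context: A $c$-edge-colored graph is a finite undirected graph in which every edge is assigned a color from $\{1,\dots,c\}$. A walk $W=v_1e_1v_2\dots v_{p-1}e_{p-1}v_p$ is closed if $v_1=v_p$; a cycle is a closed walk in which all vertices other than the first and last are distinct. A walk is properly colored (PC) if $e_i$ and $e_{i+1}$ have different colors for every $i\in\{1,\dots,p-2\}$ and, if the walk is closed, $e_{p-1}$ and $e_1$ also have different colors. An ordering $v_1,\dots,v_n$ of $V(G)$ is of type 1 if for every $i\in[n]$, all edges from $v_i$ to each connected component of $G[\{v_{i+1},\dots,v_n\}]$ have the same color (edges to different components may have different colors). $G$ is PC acyclic of type 1 if it has an ordering of its vertices of type 1. *)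

theory Defs
  imports Main
begin

definition edge_colored_graph ::
  "nat \<Rightarrow> 'a set \<Rightarrow> ('a \<Rightarrow> 'a \<Rightarrow> bool) \<Rightarrow> ('a \<Rightarrow> 'a \<Rightarrow> nat) \<Rightarrow> bool" where
  "edge_colored_graph c V E col \<longleftrightarrow>
     finite V \<and>
     (\<forall>u v. E u v \<longrightarrow> u \<in> V \<and> v \<in> V) \<and>
     (\<forall>u v. E u v \<longrightarrow> E v u) \<and>
     (\<forall>u. \<not> E u u) \<and>
     (\<forall>u v. E u v \<longrightarrow> col u v = col v u) \<and>
     (\<forall>u v. E u v \<longrightarrow> col u v \<in> {1..c})"

definition is_walk :: "('a \<Rightarrow> 'a \<Rightarrow> bool) \<Rightarrow> 'a list \<Rightarrow> bool" where
  "is_walk E vs \<longleftrightarrow> vs \<noteq> [] \<and> (\<forall>i. Suc i < length vs \<longrightarrow> E (vs ! i) (vs ! Suc i))"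

definition is_pc_cycle :: "('a \<Rightarrow> 'a \<Rightarrow> bool) \<Rightarrow> ('a \<Rightarrow> 'a \<Rightarrow> nat) \<Rightarrow> 'a list \<Rightarrow> bool" where
  "is_pc_cycle E col vs \<longleftrightarrow>
     is_walk E vs \<and> length vs \<ge> 4 \<and> hd vs = last vs \<and> distinct (butlast vs) \<and>
     (\<forall>i. i + 2 < length vs \<longrightarrow>
        col (vs ! i) (vs ! Suc i) \<noteq> col (vs ! Suc i) (vs ! Suc (Suc i))) \<and>
     col (vs ! (length vs - 2)) (vs ! (length vs - 1)) \<noteq> col (vs ! 0) (vs ! 1)"

definition has_pc_cycle :: "('a \<Rightarrow> 'a \<Rightarrow> bool) \<Rightarrow> ('a \<Rightarrow> 'a \<Rightarrow> nat) \<Rightarrow> bool" where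
  "has_pc_cycle E col \<longleftrightarrow> (\<exists>vs. is_pc_cycle E col vs)"

definition same_component :: "('a \<Rightarrow> 'a \<Rightarrow> bool) \<Rightarrow> 'a set \<Rightarrow> 'a \<Rightarrow> 'a \<Rightarrow> bool" where
  "same_component E S u w \<longleftrightarrow> u \<in> S \<and> w \<in> S \<and> (\<lambda>x y. E x y \<and> x \<in> S \<and> y \<in> S)\<^sup>*\<^sup>* u w"

definition type1_ordering ::
  "'a set \<Rightarrow> ('a \<Rightarrow> 'a \<Rightarrow> bool) \<Rightarrow> ('a \<Rightarrow> 'a \<Rightarrow> nat) \<Rightarrow> 'a list \<Rightarrow> bool" where
  "type1_ordering V E col vs \<longleftrightarrow>
     distinct vs \<and> set vs = V \<and>
     (\<forall>i < length vs. \<forall>u w.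
        same_component E (set (drop (Suc i) vs)) u w \<longrightarrow>
        E (vs ! i) u \<longrightarrow> E (vs ! i) w \<longrightarrow> col (vs ! i) u = col (vs ! i) w)"

definition pc_acyclic_type1 :: "'a set \<Rightarrow> ('a \<Rightarrow> 'a \<Rightarrow> bool) \<Rightarrow> ('a \<Rightarrow> 'a \<Rightarrow> nat) \<Rightarrow> bool" where
  "pc_acyclic_type1 V E col \<longleftrightarrow> (\<exists>vs. type1_ordering V E col vs)"

end

theory Submission
  imports Defs
begin

record ('a,'d) mg =
  vx :: "'a set"
  dt :: "'d set"
  tv :: "'d \<Rightarrow> 'a"
  mt :: "'d \<Rightarrow> 'd"
  cl :: "'d \<Rightarrow> nat"

definition wfg :: "('a,'d) mg \<Rightarrow> bool" where
  "wfg G \<longleftrightarrow> finite (vx G) \<and> finite (dt G) \<and>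
     (\<forall>d\<in>dt G. mt G d \<in> dt G \<and> mt G (mt G d) = d \<and> tv G d \<in> vx G \<and> tv G (mt G d) \<noteq> tv G d)"

definition hv :: "('a,'d) mg \<Rightarrow> 'd \<Rightarrow> 'a" where
  "hv G d = tv G (mt G d)"

definition adj :: "('a,'d) mg \<Rightarrow> 'a set \<Rightarrow> 'a \<Rightarrow> 'a \<Rightarrow> bool" where
  "adj G S u w \<longleftrightarrow> u \<in> S \<and> w \<in> S \<and> (\<exists>d\<in>dt G. tv G d = u \<and> hv G d = w)"

abbreviation conn :: "('a,'d) mg \<Rightarrow> 'a set \<Rightarrow> 'a \<Rightarrow> 'a \<Rightarrow> bool" where
  "conn G S \<equiv> (adj G S)\<^sup>*\<^sup>*"

definition sepv :: "('a,'d) mg \<Rightarrow> 'a \<Rightarrow> bool" where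
  "sepv G z \<longleftrightarrow> (\<forall>d1\<in>dt G. \<forall>d2\<in>dt G. tv G d1 = z \<longrightarrow> tv G d2 = z \<longrightarrow>
      conn G (vx G - {z}) (hv G d1) (hv G d2) \<longrightarrow> cl G d1 = cl G d2)"

definition lnk :: "('a,'d) mg \<Rightarrow> 'd \<Rightarrow> 'd \<Rightarrow> bool" where
  "lnk G d e \<longleftrightarrow> hv G d = tv G e \<and> cl G (mt G d) \<noteq> cl G e"

definition pccyc :: "('a,'d) mg \<Rightarrow> 'd list \<Rightarrow> bool" where
  "pccyc G xs \<longleftrightarrow> 2 \<le> length xs \<and> set xs \<subseteq> dt G \<and> distinct (map (tv G) xs) \<and>
     successively (lnk G) xs \<and> lnk G (last xs) (hd xs) \<and>
     (length xs = 2 \<longrightarrow> xs ! 1 \<noteq> mt G (xs ! 0))"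

definition nopc :: "('a,'d) mg \<Rightarrow> bool" where
  "nopc G \<longleftrightarrow> (\<nexists>xs. pccyc G xs)"

lemma wfgD:
  assumes "wfg G" "d \<in> dt G"
  shows "mt G d \<in> dt G" "mt G (mt G d) = d" "tv G d \<in> vx G" "hv G d \<noteq> tv G d" "hv G d \<in> vx G"
    "hv G (mt G d) = tv G d" "tv G (mt G d) = hv G d"
  using assms unfolding wfg_def hv_def by auto

lemma adj_sym: "wfg G \<Longrightarrow> adj G S u w \<Longrightarrow> adj G S w u"
  unfolding adj_def by (metis wfgD(1,6,7))

lemma conn_sym: assumes "wfg G" "conn G S u w" shows "conn G S w u"
  using assms(2)
proof (induction rule: rtranclp_induct)
  case base then show ?case by simp
next
  case (step y z)
  then show ?case using adj_sym[OF assms(1) step(2)]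
    by (meson converse_rtranclp_into_rtranclp)
qed

lemma adj_mono_set: "S \<subseteq> T \<Longrightarrow> adj G S u w \<Longrightarrow> adj G T u w"
  unfolding adj_def by auto

lemma conn_mono_set: assumes "S \<subseteq> T" "conn G S u w" shows "conn G T u w"
  using assms(2) by (induction rule: rtranclp_induct)
    (auto intro: rtranclp.rtrancl_into_rtrancl adj_mono_set[OF assms(1)])

lemma conn_mono_adj: assumes "\<And>a b. adj G S a b \<Longrightarrow> adj H T a b" "conn G S u w" shows "conn H T u w"
  using assms(2) by (induction rule: rtranclp_induct)
    (auto intro: rtranclp.rtrancl_into_rtrancl assms(1))

lemma adj_in: "adj G S u w \<Longrightarrow> u \<in> S \<and> w \<in> S"
  unfolding adj_def by auto

lemma conn_in: assumes "conn G S u w" "u \<noteq> w" shows "u \<in> S" "w \<in> S"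
  using assms by (induction rule: rtranclp_induct) (auto dest: adj_in)

lemma conn_comp: assumes "conn G S a b"
  shows "conn G {w \<in> S. conn G S a w} a b"
  using assms
proof (induction rule: rtranclp_induct)
  case base then show ?case by simp
next
  case (step y z)
  have "adj G {w \<in> S. conn G S a w} y z"
    using step adj_in[OF step(2)] unfolding adj_def by (auto intro: rtranclp.rtrancl_into_rtrancl)
  then show ?case using step(3) by (meson rtranclp.rtrancl_into_rtrancl)
qed

lemma lnk_rev: "wfg G \<Longrightarrow> d \<in> dt G \<Longrightarrow> e \<in> dt G \<Longrightarrow> lnk G d e \<Longrightarrow> lnk G (mt G e) (mt G d)"
  unfolding lnk_def by (metis hv_def wfgD(2))

lemma map_hv_chain: "successively (lnk G) xs \<Longrightarrow> xs \<noteq> [] \<Longrightarrow>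
   map (hv G) xs = tl (map (tv G) xs) @ [hv G (last xs)]"
proof (induction xs rule: induct_list012)
  case (3 x y zs)
  then show ?case by (auto simp: lnk_def)
qed auto

lemma pccyc_distinct_hv: assumes "pccyc G xs" shows "distinct (map (hv G) xs)"
proof -
  have ne: "xs \<noteq> []" using assms unfolding pccyc_def by auto
  have "map (hv G) xs = tl (map (tv G) xs) @ [tv G (hd xs)]"
    using map_hv_chain[of G xs] assms ne unfolding pccyc_def lnk_def by auto
  also have "\<dots> = rotate1 (map (tv G) xs)" using ne by (cases xs) auto
  finally show ?thesis using assms unfolding pccyc_def by simp
qed

lemma pccyc_rot: assumes "wfg G" "pccyc G (xs @ ys)" shows "pccyc G (ys @ xs)"
proof (cases "xs = [] \<or> ys = []")
  case True then show ?thesis using assms by auto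
next
  case False
  then have ne: "xs \<noteq> []" "ys \<noteq> []" by auto
  have s: "successively (lnk G) xs" "successively (lnk G) ys" "lnk G (last xs) (hd ys)"
    "lnk G (last ys) (hd xs)"
    using assms(2) ne unfolding pccyc_def by (auto simp: successively_append_iff)
  have l2: "ys @ xs = [b, a]" if "xs = [a]" "ys = [b]" for a b using that by simp
  show ?thesis unfolding pccyc_def
  proof (intro conjI)
    show "2 \<le> length (ys @ xs)" "set (ys @ xs) \<subseteq> dt G" "distinct (map (tv G) (ys @ xs))"
      using assms(2) unfolding pccyc_def by auto
    show "successively (lnk G) (ys @ xs)" using s ne by (auto simp: successively_append_iff)
    show "lnk G (last (ys @ xs)) (hd (ys @ xs))" using s ne by auto
    show "length (ys @ xs) = 2 \<longrightarrow> (ys @ xs) ! 1 \<noteq> mt G ((ys @ xs) ! 0)"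
    proof
      assume "length (ys @ xs) = 2"
      then obtain a b where ab: "xs = [a]" "ys = [b]" using ne
        by (cases xs; cases ys) auto
      have "b \<noteq> mt G a" using assms(2) ab unfolding pccyc_def by auto
      moreover have "a \<in> dt G" "b \<in> dt G" using assms(2) ab unfolding pccyc_def by auto
      ultimately show "(ys @ xs) ! 1 \<noteq> mt G ((ys @ xs) ! 0)" using ab wfgD(2)[OF assms(1)] by force
    qed
  qed
qed

lemma pccyc_rev: assumes "wfg G" "pccyc G xs" shows "pccyc G (rev (map (mt G) xs))"
proof -
  have ne: "xs \<noteq> []" and sub: "set xs \<subseteq> dt G" using assms(2) unfolding pccyc_def by auto
  have "successively (\<lambda>x y. lnk G (mt G y) (mt G x)) xs"
    using assms(2) unfolding pccyc_def
    by (auto intro!: successively_mono[of "lnk G" xs] lnk_rev[OF assms(1)] dest: subsetD[OF sub])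
  then have s: "successively (lnk G) (rev (map (mt G) xs))"
    by (simp add: successively_map)
  have lh: "last xs \<in> dt G" "hd xs \<in> dt G" using sub last_in_set[OF ne] hd_in_set[OF ne] by auto
  have "lnk G (mt G (hd xs)) (mt G (last xs))"
    using lnk_rev[OF assms(1) lh] assms(2) unfolding pccyc_def by auto
  then have w: "lnk G (last (rev (map (mt G) xs))) (hd (rev (map (mt G) xs)))"
    using ne by (simp add: last_rev hd_rev hd_map last_map)
  have d: "distinct (map (tv G) (rev (map (mt G) xs)))"
  proof -
    have e: "map (tv G) (rev (map (mt G) xs)) = rev (map (hv G) xs)"
      by (induction xs) (auto simp: hv_def)
    show ?thesis unfolding e using pccyc_distinct_hv[OF assms(2)] by simp
  qed
  show ?thesis unfolding pccyc_def
  proof (intro conjI)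
    show "2 \<le> length (rev (map (mt G) xs))" using assms(2) unfolding pccyc_def by auto
    show "set (rev (map (mt G) xs)) \<subseteq> dt G" using sub wfgD(1)[OF assms(1)] by auto
    show "length (rev (map (mt G) xs)) = 2 \<longrightarrow>
        rev (map (mt G) xs) ! 1 \<noteq> mt G (rev (map (mt G) xs) ! 0)"
    proof
      assume "length (rev (map (mt G) xs)) = 2"
      then obtain a b where ab: "xs = [a, b]"
        by (cases xs; cases "tl xs"; cases "tl (tl xs)") auto
      then have "b \<noteq> mt G a" "a \<in> dt G" "b \<in> dt G" using assms(2) unfolding pccyc_def by auto
      then show "rev (map (mt G) xs) ! 1 \<noteq> mt G (rev (map (mt G) xs) ! 0)"
        using ab wfgD(2)[OF assms(1)] by auto
    qed
  qed (use s w d in auto)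
qed

lemma pccyc_front: assumes "wfg G" "pccyc G xs" "x \<in> set xs" shows "\<exists>R. pccyc G (x # R)"
proof -
  obtain A B where "xs = A @ x # B" using split_list[OF assms(3)] by auto
  then have "pccyc G ((x # B) @ A)" using pccyc_rot[OF assms(1), of A "x # B"] assms(2) by simp
  then show ?thesis by auto
qed

lemma pccyc_transfer:
  assumes "pccyc G xs" "set xs \<subseteq> dt H"
    "\<And>d. d \<in> set xs \<Longrightarrow> tv H d = tv G d \<and> hv H d = hv G d \<and> cl H d = cl G d \<and>
        mt H d = mt G d \<and> cl H (mt G d) = cl G (mt G d)"
  shows "pccyc H xs"
proof -
  have L: "lnk H d e \<longleftrightarrow> lnk G d e" if "d \<in> set xs" "e \<in> set xs" for d e
    using assms(3)[OF that(1)] assms(3)[OF that(2)] unfolding lnk_def by auto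
  have eq: "map (tv H) xs = map (tv G) xs" using assms(3) by auto
  have "distinct (map (tv H) xs)" using assms(1) unfolding eq pccyc_def by simp
  moreover have "successively (lnk H) xs" using assms(1) L unfolding pccyc_def
    by (metis successively_cong)
  moreover have "lnk H (last xs) (hd xs)" using assms(1) L unfolding pccyc_def
    by (metis last_in_set hd_in_set list.size(3) not_numeral_le_zero)
  moreover have "length xs = 2 \<Longrightarrow> xs ! 1 \<noteq> mt H (xs ! 0)"
    using assms(1,3) unfolding pccyc_def by (metis nth_mem zero_less_numeral)
  ultimately show ?thesis using assms(1,2) unfolding pccyc_def by auto
qed

definition restr :: "('a,'d) mg \<Rightarrow> 'a set \<Rightarrow> ('a,'d) mg" where
  "restr G W = G\<lparr>vx := W, dt := {d \<in> dt G. tv G d \<in> W \<and> hv G d \<in> W}\<rparr>"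

definition deledge :: "('a,'d) mg \<Rightarrow> 'd \<Rightarrow> ('a,'d) mg" where
  "deledge G d = G\<lparr>dt := dt G - {d, mt G d}\<rparr>"

definition addedge :: "('a,'d) mg \<Rightarrow> 'd \<Rightarrow> 'd \<Rightarrow> 'a \<Rightarrow> 'a \<Rightarrow> nat \<Rightarrow> nat \<Rightarrow> ('a,'d) mg" where
  "addedge G x y s v a b = G\<lparr>dt := dt G \<union> {x, y}, tv := (tv G)(x := s, y := v),
      mt := (mt G)(x := y, y := x), cl := (cl G)(x := a, y := b)\<rparr>"

definition repl :: "('a,'d) mg \<Rightarrow> 'a set \<Rightarrow> 'd \<Rightarrow> 'd \<Rightarrow> 'a \<Rightarrow> 'a \<Rightarrow> nat \<Rightarrow> nat \<Rightarrow> ('a,'d) mg" where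
  "repl G X x y s v a b = addedge (restr G (vx G - X)) x y s v a b"

lemma restr_simps[simp]: "vx (restr G W) = W" "dt (restr G W) = {d \<in> dt G. tv G d \<in> W \<and> hv G d \<in> W}"
  "tv (restr G W) = tv G" "mt (restr G W) = mt G" "cl (restr G W) = cl G" "hv (restr G W) = hv G"
  unfolding restr_def hv_def by auto

lemma deledge_simps[simp]: "vx (deledge G d) = vx G" "dt (deledge G d) = dt G - {d, mt G d}"
  "tv (deledge G d) = tv G" "mt (deledge G d) = mt G" "cl (deledge G d) = cl G" "hv (deledge G d) = hv G"
  unfolding deledge_def hv_def by auto

lemma addedge_simps[simp]: "vx (addedge G x y s v a b) = vx G"
  "dt (addedge G x y s v a b) = dt G \<union> {x, y}"
  "tv (addedge G x y s v a b) = (tv G)(x := s, y := v)"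
  "mt (addedge G x y s v a b) = (mt G)(x := y, y := x)"
  "cl (addedge G x y s v a b) = (cl G)(x := a, y := b)"
  unfolding addedge_def by auto

lemma wfg_restr: assumes "wfg G" "W \<subseteq> vx G" shows "wfg (restr G W)"
  unfolding wfg_def
proof (intro conjI ballI)
  show "finite (vx (restr G W))" "finite (dt (restr G W))" using assms unfolding wfg_def
    by (auto simp: finite_subset)
  fix e assume e: "e \<in> dt (restr G W)"
  then have e': "e \<in> dt G" "tv G e \<in> W" "hv G e \<in> W" by auto
  show "mt (restr G W) e \<in> dt (restr G W)" "mt (restr G W) (mt (restr G W) e) = e"
    "tv (restr G W) e \<in> vx (restr G W)" "tv (restr G W) (mt (restr G W) e) \<noteq> tv (restr G W) e"
    using wfgD[OF assms(1) e'(1)] e' by auto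
qed

lemma wfg_deledge: assumes "wfg G" "d \<in> dt G" shows "wfg (deledge G d)"
  unfolding wfg_def
proof (intro conjI ballI)
  show "finite (vx (deledge G d))" "finite (dt (deledge G d))" using assms unfolding wfg_def by auto
  fix e assume e: "e \<in> dt (deledge G d)"
  then have e': "e \<in> dt G" "e \<noteq> d" "e \<noteq> mt G d" by auto
  have i1: "mt G (mt G e) = e" "mt G (mt G d) = d" using wfgD(2)[OF assms(1) e'(1)] wfgD(2)[OF assms] by auto
  have "mt G e \<noteq> d" using e'(3) i1 by auto
  moreover have "mt G e \<noteq> mt G d" using e'(2) i1 by metis
  ultimately show "mt (deledge G d) e \<in> dt (deledge G d)" using wfgD(1)[OF assms(1) e'(1)] by simp
  show "mt (deledge G d) (mt (deledge G d) e) = e" "tv (deledge G d) e \<in> vx (deledge G d)"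
    "tv (deledge G d) (mt (deledge G d) e) \<noteq> tv (deledge G d) e"
    using wfgD(2,3,7,4)[OF assms(1) e'(1)] by auto
qed

lemma wfg_addedge: assumes "wfg G" "x \<notin> dt G" "y \<notin> dt G" "x \<noteq> y" "s \<in> vx G" "v \<in> vx G" "s \<noteq> v"
  shows "wfg (addedge G x y s v a b)"
  unfolding wfg_def
proof (intro conjI)
  show "finite (vx (addedge G x y s v a b))" "finite (dt (addedge G x y s v a b))"
    using assms unfolding wfg_def by auto
  show "\<forall>e\<in>dt (addedge G x y s v a b). mt (addedge G x y s v a b) e \<in> dt (addedge G x y s v a b) \<and>
        mt (addedge G x y s v a b) (mt (addedge G x y s v a b) e) = e \<and>
        tv (addedge G x y s v a b) e \<in> vx (addedge G x y s v a b) \<and>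
        tv (addedge G x y s v a b) (mt (addedge G x y s v a b) e) \<noteq> tv (addedge G x y s v a b) e"
  proof
  fix e assume e: "e \<in> dt (addedge G x y s v a b)"
  show "mt (addedge G x y s v a b) e \<in> dt (addedge G x y s v a b) \<and>
        mt (addedge G x y s v a b) (mt (addedge G x y s v a b) e) = e \<and>
        tv (addedge G x y s v a b) e \<in> vx (addedge G x y s v a b) \<and>
        tv (addedge G x y s v a b) (mt (addedge G x y s v a b) e) \<noteq> tv (addedge G x y s v a b) e"
  proof (cases "e = x \<or> e = y")
    case True then show ?thesis using assms(2-7) by (elim disjE) simp_all
  next
    case False
    then have e': "e \<in> dt G" using e by auto
    have n: "mt G e \<noteq> x" "mt G e \<noteq> y" using wfgD(1)[OF assms(1) e'] assms(2,3) by auto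
    have m: "mt (addedge G x y s v a b) e = mt G e" "tv (addedge G x y s v a b) e = tv G e"
      "tv (addedge G x y s v a b) (mt G e) = tv G (mt G e)"
      "mt (addedge G x y s v a b) (mt G e) = mt G (mt G e)"
      using False n by auto
    show ?thesis unfolding m using wfgD(1,2,3,7)[OF assms(1) e'] wfgD(4)[OF assms(1) e'] by simp
  qed
qed
qed

lemma addedge_hv_old: assumes "wfg G" "x \<notin> dt G" "y \<notin> dt G" "d \<in> dt G"
  shows "hv (addedge G x y s v a b) d = hv G d"
proof -
  have "mt G d \<noteq> x" "mt G d \<noteq> y" "d \<noteq> x" "d \<noteq> y" using assms wfgD(1)[OF assms(1,4)] by auto
  then show ?thesis unfolding hv_def by simp
qed

lemma addedge_swap: "x \<noteq> y \<Longrightarrow> addedge G x y s v a b = addedge G y x v s b a"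
  unfolding addedge_def by (simp add: fun_upd_twist[of x y] insert_commute)

lemma repl_swap: "x \<noteq> y \<Longrightarrow> repl G X x y s v a b = repl G X y x v s b a"
  unfolding repl_def by (rule addedge_swap)

definition ext :: "('a,'d) mg \<Rightarrow> 'a set \<Rightarrow> ('a,'d) mg \<Rightarrow> bool" where
  "ext G X H \<longleftrightarrow> vx H = vx G - X \<and> (\<forall>d\<in>dt G. tv G d \<notin> X \<longrightarrow> hv G d \<notin> X \<longrightarrow>
      d \<in> dt H \<and> tv H d = tv G d \<and> hv H d = hv G d \<and> cl H d = cl G d)"

lemma sepvD: "sepv G z \<Longrightarrow> d1 \<in> dt G \<Longrightarrow> d2 \<in> dt G \<Longrightarrow> tv G d1 = z \<Longrightarrow> tv G d2 = z \<Longrightarrow>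
   conn G (vx G - {z}) (hv G d1) (hv G d2) \<Longrightarrow> cl G d1 = cl G d2"
  unfolding sepv_def by blast

lemma ext_restr: assumes "wfg G" shows "ext G X (restr G (vx G - X))"
  unfolding ext_def
proof (intro conjI ballI impI)
  fix d assume d: "d \<in> dt G" "tv G d \<notin> X" "hv G d \<notin> X"
  have "tv G d \<in> vx G" "hv G d \<in> vx G" using wfgD(3,5)[OF assms d(1)] by auto
  then show "d \<in> dt (restr G (vx G - X))" using d by simp
qed simp_all

lemma ext_repl: assumes "wfg G" "x \<notin> dt G" "y \<notin> dt G" shows "ext G X (repl G X x y s v a b)"
  unfolding ext_def repl_def
proof (intro conjI ballI impI)
  fix d assume d: "d \<in> dt G" "tv G d \<notin> X" "hv G d \<notin> X"
  have "d \<noteq> x" "d \<noteq> y" "mt G d \<noteq> x" "mt G d \<noteq> y" using d(1) wfgD(1)[OF assms(1) d(1)] assms(2,3) by auto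
  then show "d \<in> dt (addedge (restr G (vx G - X)) x y s v a b)"
    "tv (addedge (restr G (vx G - X)) x y s v a b) d = tv G d"
    "hv (addedge (restr G (vx G - X)) x y s v a b) d = hv G d"
    "cl (addedge (restr G (vx G - X)) x y s v a b) d = cl G d"
    using d wfgD(3,5)[OF assms(1) d(1)] by (auto simp: hv_def)
qed simp

lemma conn_lift:
  assumes wf: "wfg G"
    and XP: "\<And>d. d \<in> dt G \<Longrightarrow> tv G d \<in> X \<Longrightarrow> hv G d \<in> X \<union> P"
    and sub: "\<And>a b. a \<notin> X \<Longrightarrow> b \<notin> X \<Longrightarrow> adj G (vx G - {z}) a b \<Longrightarrow> adj H S a b"
    and portal: "\<And>p q. p \<in> P - {z} \<Longrightarrow> q \<in> P - {z} \<Longrightarrow> conn H S p q"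
    and c: "conn G (vx G - {z}) a w" and a: "a \<notin> X"
  shows "(w \<notin> X \<and> conn H S a w) \<or> (w \<in> X \<and> (\<exists>p\<in>P-{z}. conn H S a p))"
  using c
proof (induction rule: rtranclp_induct)
  case base then show ?case using a by simp
next
  case (step y w')
  obtain g where g: "g \<in> dt G" "tv G g = y" "hv G g = w'" "y \<in> vx G - {z}" "w' \<in> vx G - {z}"
    using step(2) unfolding adj_def by auto
  show ?case
  proof (cases "w' \<in> X")
    case True
    show ?thesis
    proof (cases "y \<in> X")
      case True then show ?thesis using step(3) \<open>w' \<in> X\<close> by auto
    next
      case False
      have "hv G (mt G g) \<in> X \<union> P" using XP[OF wfgD(1)[OF wf g(1)]] wfgD(7)[OF wf g(1)] g True by simp
      then have "y \<in> P" using wfgD(6)[OF wf g(1)] g False by simp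
      then show ?thesis using step(3) False True g(4) by auto
    qed
  next
    case False
    show ?thesis
    proof (cases "y \<in> X")
      case True
      then have "w' \<in> P" using XP[OF g(1)] g False by auto
      obtain p where "p \<in> P - {z}" "conn H S a p" using step(3) True by auto
      then have "conn H S a w'" using portal[of p w'] \<open>w' \<in> P\<close> g(5)
        by (meson DiffD2 DiffI rtranclp_trans)
      then show ?thesis using False by simp
    next
      case yX: False
      have "adj H S y w'" using sub[OF yX False step(2)] .
      then show ?thesis using step(3) yX False by (meson rtranclp.rtrancl_into_rtrancl)
    qed
  qed
qed

lemma sep_lift:
  assumes wf: "wfg G" and ex: "ext G X H"
    and XP: "\<And>d. d \<in> dt G \<Longrightarrow> tv G d \<in> X \<Longrightarrow> hv G d \<in> X \<union> P"
    and portal: "\<And>p q. p \<in> P - {z} \<Longrightarrow> q \<in> P - {z} \<Longrightarrow> conn H (vx H - {z}) p q"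
    and z: "z \<notin> X" "z \<notin> P" and sH: "sepv H z"
  shows "sepv G z"
  unfolding sepv_def
proof (intro ballI impI)
  fix d1 d2 assume d: "d1 \<in> dt G" "d2 \<in> dt G" "tv G d1 = z" "tv G d2 = z"
    and c: "conn G (vx G - {z}) (hv G d1) (hv G d2)"
  have nX: "hv G d1 \<notin> X" "hv G d2 \<notin> X"
    using XP[OF wfgD(1)[OF wf d(1)]] XP[OF wfgD(1)[OF wf d(2)]] d z
      wfgD(6,7)[OF wf d(1)] wfgD(6,7)[OF wf d(2)] by auto
  have exx: "vx H = vx G - X" "\<And>d. d \<in> dt G \<Longrightarrow> tv G d \<notin> X \<Longrightarrow> hv G d \<notin> X \<Longrightarrow>
      d \<in> dt H \<and> tv H d = tv G d \<and> hv H d = hv G d \<and> cl H d = cl G d"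
    using ex unfolding ext_def by auto
  have sub: "adj H (vx H - {z}) a b" if A: "a \<notin> X" "b \<notin> X" "adj G (vx G - {z}) a b" for a b
  proof -
    obtain g where g: "g \<in> dt G" "tv G g = a" "hv G g = b" "a \<in> vx G - {z}" "b \<in> vx G - {z}"
      using A(3) unfolding adj_def by auto
    then show ?thesis using exx(2)[of g] A exx(1) unfolding adj_def by auto
  qed
  have "conn H (vx H - {z}) (hv G d1) (hv G d2)"
    using conn_lift[OF wf XP sub portal c nX(1)] nX(2) by auto
  moreover have "d1 \<in> dt H" "d2 \<in> dt H" "tv H d1 = z" "tv H d2 = z" "hv H d1 = hv G d1"
    "hv H d2 = hv G d2" "cl H d1 = cl G d1" "cl H d2 = cl G d2"
    using exx(2)[OF d(1)] exx(2)[OF d(2)] d z nX by auto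
  ultimately show "cl G d1 = cl G d2" using sepvD[OF sH, of d1 d2] by simp
qed

definition pcpath :: "('a,'d) mg \<Rightarrow> 'd list \<Rightarrow> 'a \<Rightarrow> 'a \<Rightarrow> 'a set \<Rightarrow> bool" where
  "pcpath G P s v X \<longleftrightarrow> 2 \<le> length P \<and> set P \<subseteq> dt G \<and> successively (lnk G) P \<and>
     tv G (hd P) = s \<and> hv G (last P) = v \<and> distinct (map (tv G) P) \<and> set (map (tv G) (tl P)) \<subseteq> X"

lemma pcpath_ends: assumes "pcpath G P s v X"
  shows "hv G (hd P) \<in> X" "tv G (last P) \<in> X" "P \<noteq> []" "set (map (tv G) P) \<subseteq> insert s X"
proof -
  obtain p1 p2 rest where P: "P = p1 # p2 # rest" using assms unfolding pcpath_def
    by (cases P; cases "tl P") auto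
  show "hv G (hd P) \<in> X" using assms P unfolding pcpath_def lnk_def by auto
  have "last P \<in> set (tl P)" using P by auto
  then show "tv G (last P) \<in> X" using assms unfolding pcpath_def by auto
  show "P \<noteq> []" using P by simp
  show "set (map (tv G) P) \<subseteq> insert s X" using assms P unfolding pcpath_def by auto
qed

locale rp =
  fixes G :: "('a,'d) mg" and X :: "'a set" and s v :: 'a and a b :: nat and x y :: 'd
  assumes wf: "wfg G" and Xsub: "X \<subseteq> vx G" and sv: "s \<in> vx G" "v \<in> vx G" "s \<notin> X" "v \<notin> X" "s \<noteq> v"
    and R1: "\<And>d. d \<in> dt G \<Longrightarrow> tv G d \<in> X \<Longrightarrow> hv G d \<in> X \<union> {s, v}"
    and fresh: "x \<notin> dt G" "y \<notin> dt G" "x \<noteq> y"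
begin

abbreviation "H \<equiv> repl G X x y s v a b"

lemma H_wf: "wfg H"
  unfolding repl_def using sv fresh Xsub
  by (intro wfg_addedge wfg_restr wf) auto

lemma H_ext: "ext G X H" using ext_repl[OF wf fresh(1,2)] .

lemma H_simps: "vx H = vx G - X" "x \<in> dt H" "y \<in> dt H" "tv H x = s" "tv H y = v"
  "mt H x = y" "mt H y = x" "cl H x = a" "cl H y = b" "hv H x = v" "hv H y = s"
  using fresh unfolding repl_def hv_def by auto

lemma H_old: assumes "d \<in> dt H" "d \<noteq> x" "d \<noteq> y"
  shows "d \<in> dt G" "tv H d = tv G d" "hv H d = hv G d" "mt H d = mt G d" "cl H d = cl G d"
    "cl H (mt H d) = cl G (mt G d)" "tv G d \<notin> X" "hv G d \<notin> X"
proof -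
  have d: "d \<in> dt G" "tv G d \<in> vx G - X" "hv G d \<in> vx G - X" using assms unfolding repl_def by auto
  have "mt G d \<noteq> x" "mt G d \<noteq> y" using wfgD(1)[OF wf d(1)] fresh by auto
  then show "d \<in> dt G" "tv H d = tv G d" "hv H d = hv G d" "mt H d = mt G d" "cl H d = cl G d"
    "cl H (mt H d) = cl G (mt G d)" "tv G d \<notin> X" "hv G d \<notin> X"
    using d assms unfolding repl_def hv_def by auto
qed

lemma H_card: assumes "X \<noteq> {}" shows "card (vx H) < card (vx G)"
proof -
  have "finite (vx G)" using wf unfolding wfg_def by auto
  moreover have "vx G - X \<subset> vx G" using assms Xsub by auto
  ultimately show ?thesis unfolding H_simps(1) by (simp add: psubset_card_mono)
qed

lemma H_sep_other: assumes "z \<in> vx H" "z \<noteq> s" "z \<noteq> v" "sepv H z" shows "sepv G z"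
proof (rule sep_lift[OF wf H_ext R1 _ _ _ assms(4)])
  fix p q assume pq: "p \<in> {s, v} - {z}" "q \<in> {s, v} - {z}"
  have sv': "s \<in> vx H - {z}" "v \<in> vx H - {z}" using sv assms H_simps(1) by auto
  have "adj H (vx H - {z}) s v" using H_simps sv' unfolding adj_def by blast
  then have "conn H (vx H - {z}) s v" "conn H (vx H - {z}) v s"
    using adj_sym[OF H_wf] by blast+
  then show "conn H (vx H - {z}) p q" using pq by auto
qed (use assms H_simps(1) in auto)

lemma H_sep_s:
  assumes R2s: "\<And>d. d \<in> dt G \<Longrightarrow> tv G d = s \<Longrightarrow> hv G d \<in> X \<Longrightarrow> cl G d = a"
    and sH: "sepv H s"
  shows "sepv G s"
  unfolding sepv_def
proof (intro ballI impI)
  fix d1 d2 assume d: "d1 \<in> dt G" "d2 \<in> dt G" "tv G d1 = s" "tv G d2 = s"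
    and c: "conn G (vx G - {s}) (hv G d1) (hv G d2)"
  have exx: "\<And>d. d \<in> dt G \<Longrightarrow> tv G d \<notin> X \<Longrightarrow> hv G d \<notin> X \<Longrightarrow>
      d \<in> dt H \<and> tv H d = tv G d \<and> hv H d = hv G d \<and> cl H d = cl G d"
    using H_ext unfolding ext_def by auto
  have sub: "adj H (vx H - {s}) p q" if A: "p \<notin> X" "q \<notin> X" "adj G (vx G - {s}) p q" for p q
  proof -
    obtain g where g: "g \<in> dt G" "tv G g = p" "hv G g = q" "p \<in> vx G - {s}" "q \<in> vx G - {s}"
      using A(3) unfolding adj_def by auto
    then show ?thesis using exx[of g] A H_simps(1) unfolding adj_def by auto
  qed
  have portal: "conn H (vx H - {s}) p q" if "p \<in> {s, v} - {s}" "q \<in> {s, v} - {s}" for p q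
    using that by auto
  have L: "(w \<notin> X \<and> conn H (vx H - {s}) p w) \<or> (w \<in> X \<and> (\<exists>q\<in>{s,v}-{s}. conn H (vx H - {s}) p q))"
    if "conn G (vx G - {s}) p w" "p \<notin> X" for p w
  proof (rule conn_lift[where P="{s,v}"])
    show "wfg G" by (rule wf)
    show "hv G d \<in> X \<union> {s, v}" if "d \<in> dt G" "tv G d \<in> X" for d using R1 that by blast
    show "adj H (vx H - {s}) a b" if "a \<notin> X" "b \<notin> X" "adj G (vx G - {s}) a b" for a b
      using sub that by blast
    show "conn H (vx H - {s}) p q" if "p \<in> {s, v} - {s}" "q \<in> {s, v} - {s}" for p q
      using portal that by blast
  qed (use that in auto)
  have inH: "d \<in> dt H \<and> tv H d = tv G d \<and> hv H d = hv G d \<and> cl H d = cl G d"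
    if "d \<in> dt G" "tv G d = s" "hv G d \<notin> X" for d
    using exx[OF that(1)] that sv by auto
  have sepH: "cl H e1 = cl H e2" if "e1 \<in> dt H" "e2 \<in> dt H" "tv H e1 = s" "tv H e2 = s"
    "conn H (vx H - {s}) (hv H e1) (hv H e2)" for e1 e2
    using sepvD[OF sH that] .
  have cs: "conn G (vx G - {s}) (hv G d2) (hv G d1)" using conn_sym[OF wf c] .
  show "cl G d1 = cl G d2"
  proof (cases "hv G d1 \<in> X")
    case h1: True
    show ?thesis
    proof (cases "hv G d2 \<in> X")
      case True then show ?thesis using R2s[OF d(1) d(3) h1] R2s[OF d(2) d(4) True] by simp
    next
      case h2: False
      from L[OF cs h2] h1 have "conn H (vx H - {s}) (hv G d2) v" by auto
      then have "conn H (vx H - {s}) v (hv G d2)" using conn_sym[OF H_wf] by blast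
      then have c2: "conn H (vx H - {s}) (hv H x) (hv H d2)"
        using inH[OF d(2) d(4) h2] H_simps(10) by simp
      have "cl H x = cl H d2"
        by (rule sepH[OF H_simps(2) _ H_simps(4) _ c2]) (use inH[OF d(2) d(4) h2] d in auto)
      then show ?thesis using R2s[OF d(1) d(3) h1] inH[OF d(2) d(4) h2] H_simps by simp
    qed
  next
    case h1: False
    show ?thesis
    proof (cases "hv G d2 \<in> X")
      case h2: True
      from L[OF c h1] h2 have "conn H (vx H - {s}) (hv G d1) v" by auto
      then have "conn H (vx H - {s}) v (hv G d1)" using conn_sym[OF H_wf] by blast
      then have c2: "conn H (vx H - {s}) (hv H x) (hv H d1)"
        using inH[OF d(1) d(3) h1] H_simps(10) by simp
      have "cl H x = cl H d1"
        by (rule sepH[OF H_simps(2) _ H_simps(4) _ c2]) (use inH[OF d(1) d(3) h1] d in auto)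
      then show ?thesis using R2s[OF d(2) d(4) h2] inH[OF d(1) d(3) h1] H_simps by simp
    next
      case h2: False
      from L[OF c h1] h2 have "conn H (vx H - {s}) (hv G d1) (hv G d2)" by auto
      then have c3: "conn H (vx H - {s}) (hv H d1) (hv H d2)"
        using inH[OF d(1) d(3) h1] inH[OF d(2) d(4) h2] by simp
      have "cl H d1 = cl H d2"
        by (rule sepH[OF _ _ _ _ c3]) (use inH[OF d(1) d(3) h1] inH[OF d(2) d(4) h2] d in auto)
      then show ?thesis using inH[OF d(1) d(3) h1] inH[OF d(2) d(4) h2] by simp
    qed
  qed
qed

end

lemma rp_swap: "rp G X s v x y \<Longrightarrow> rp G X v s y x"
  unfolding rp_def by (auto simp: insert_commute)

context rp begin

lemma H_sep_v:
  assumes R2v: "\<And>d. d \<in> dt G \<Longrightarrow> tv G d = v \<Longrightarrow> hv G d \<in> X \<Longrightarrow> cl G d = b"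
    and sH: "sepv H v"
  shows "sepv G v"
proof -
  interpret sw: rp G X v s b a y x by (rule rp_swap) (rule rp_axioms)
  have "repl G X y x v s b a = H" by (rule repl_swap[OF fresh(3), symmetric])
  then show ?thesis using sw.H_sep_s[OF R2v] sH by simp
qed

lemma H_lnk_old: assumes "r \<in> dt H" "r \<noteq> x" "r \<noteq> y" "r' \<in> dt H" "r' \<noteq> x" "r' \<noteq> y"
  shows "lnk H r r' \<longleftrightarrow> lnk G r r'"
  using H_old[OF assms(1-3)] H_old[OF assms(4-6)] unfolding lnk_def by simp

lemma H_nopc:
  assumes R2s: "\<And>d. d \<in> dt G \<Longrightarrow> tv G d = s \<Longrightarrow> hv G d \<in> X \<Longrightarrow> cl G d = a"
    and R2v: "\<And>d. d \<in> dt G \<Longrightarrow> tv G d = v \<Longrightarrow> hv G d \<in> X \<Longrightarrow> cl G d = b"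
    and P: "pcpath G P s v X" and nG: "nopc G"
  shows "nopc H"
  unfolding nopc_def
proof
  assume "\<exists>Z. pccyc H Z"
  then obtain Z where Z: "pccyc H Z" by blast
  have "\<exists>Z'. pccyc H Z' \<and> x \<in> set Z'"
  proof (cases "x \<in> set Z")
    case True then show ?thesis using Z by blast
  next
    case xZ: False
    show ?thesis
    proof (cases "y \<in> set Z")
      case True
      have "x \<in> set (rev (map (mt H) Z))" using True H_simps(7) by force
      then show ?thesis using pccyc_rev[OF H_wf Z] by blast
    next
      case False
      have "set Z \<subseteq> dt H" using Z unfolding pccyc_def by auto
      then have old: "\<And>d. d \<in> set Z \<Longrightarrow> d \<in> dt H \<and> d \<noteq> x \<and> d \<noteq> y" using xZ False by auto
      have "pccyc G Z"
      proof (rule pccyc_transfer[OF Z])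
        show "set Z \<subseteq> dt G" using old H_old(1) by blast
        fix d assume "d \<in> set Z"
        then have "d \<in> dt H" "d \<noteq> x" "d \<noteq> y" using old by auto
        then show "tv G d = tv H d \<and> hv G d = hv H d \<and> cl G d = cl H d \<and> mt G d = mt H d \<and>
          cl G (mt H d) = cl H (mt H d)" using H_old[of d] by simp
      qed
      then show ?thesis using nG unfolding nopc_def by blast
    qed
  qed
  then obtain Z' where Z': "pccyc H Z'" "x \<in> set Z'" by blast
  obtain R where C: "pccyc H (x # R)" using pccyc_front[OF H_wf Z'] by blast
  have Rne: "R \<noteq> []" using C unfolding pccyc_def by auto
  have Rsub: "set R \<subseteq> dt H" using C unfolding pccyc_def by auto
  have dR: "distinct (map (tv H) R)" "s \<notin> tv H ` set R" using C H_simps(4) unfolding pccyc_def by auto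
  have sR: "successively (lnk H) R" and l1: "lnk H x (hd R)"
    using C Rne unfolding pccyc_def by (auto simp: successively_Cons)
  have l2: "lnk H (last R) x" using C Rne unfolding pccyc_def by auto
  have xR: "x \<notin> set R" using dR(2) H_simps(4) by force
  have hdR: "tv H (hd R) = v" using l1 H_simps(10) unfolding lnk_def by simp
  have yR: "y \<notin> set R"
  proof
    assume yR: "y \<in> set R"
    have "inj_on (tv H) (set R)" using dR(1) by (simp add: distinct_map)
    then have "y = hd R" using yR hd_in_set[OF Rne] hdR H_simps(5) by (metis inj_on_def)
    then show False using l1 H_simps(6) unfolding lnk_def by simp
  qed
  have old: "r \<in> dt H" "r \<noteq> x" "r \<noteq> y" if "r \<in> set R" for r using that Rsub xR yR by auto
  note Ro = H_old[OF old]
  have Pe: "hv G (hd P) \<in> X" "tv G (last P) \<in> X" "P \<noteq> []" "set (map (tv G) P) \<subseteq> insert s X"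
    using pcpath_ends[OF P] by auto
  have Pp: "2 \<le> length P" "set P \<subseteq> dt G" "successively (lnk G) P" "tv G (hd P) = s" "hv G (last P) = v"
    "distinct (map (tv G) P)" using P unfolding pcpath_def by auto
  have sRG: "successively (lnk G) R"
    using sR by (rule successively_mono) (use H_lnk_old old in blast)
  have hP: "hd P \<in> dt G" "last P \<in> dt G" using Pp(2) Pe(3) by auto
  have junc: "lnk G (last P) (hd R)"
  proof -
    have m: "mt G (last P) \<in> dt G" "tv G (mt G (last P)) = v" "hv G (mt G (last P)) \<in> X"
      using wfgD(1,6,7)[OF wf hP(2)] Pp(5) Pe(2) by auto
    have "cl G (mt G (last P)) = b" using R2v[OF m] .
    moreover have "cl H (hd R) \<noteq> b" using l1 H_simps(6,9) unfolding lnk_def by simp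
    moreover have "cl H (hd R) = cl G (hd R)" "tv H (hd R) = tv G (hd R)" using Ro[of "hd R"] Rne by auto
    ultimately show ?thesis unfolding lnk_def using Pp(5) hdR by simp
  qed
  have wrap: "lnk G (last R) (hd P)"
  proof -
    have "cl G (hd P) = a" using R2s[OF hP(1) Pp(4) Pe(1)] .
    moreover have "hv H (last R) = s" "cl H (mt H (last R)) \<noteq> a" using l2 H_simps(4,8) unfolding lnk_def by auto
    moreover have "hv H (last R) = hv G (last R)" "cl H (mt H (last R)) = cl G (mt G (last R))"
      using Ro[of "last R"] Rne by auto
    ultimately show ?thesis unfolding lnk_def using Pp(4) by simp
  qed
  have "pccyc G (P @ R)"
    unfolding pccyc_def
  proof (intro conjI)
    show "2 \<le> length (P @ R)" using Pp(1) by simp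
    show "set (P @ R) \<subseteq> dt G" using Pp(2) Ro by auto
    have tvR: "tv G r \<notin> insert s X" if "r \<in> set R" for r using Ro[OF that] dR(2) that by force
    have "distinct (map (tv G) R)" using dR(1) Ro by (simp add: distinct_map inj_on_def)
    moreover have "set (map (tv G) P) \<inter> set (map (tv G) R) = {}"
    proof -
      have "set (map (tv G) R) \<inter> insert s X = {}" using tvR by auto
      then show ?thesis using Pe(4) by blast
    qed
    ultimately show "distinct (map (tv G) (P @ R))" using Pp(6) by simp
    show "successively (lnk G) (P @ R)" using Pp(3) sRG junc Pe(3) Rne
      by (simp add: successively_append_iff)
    show "lnk G (last (P @ R)) (hd (P @ R))" using wrap Pe(3) Rne by simp
    have "length (P @ R) \<noteq> 2" using Pp(1) Rne by (cases R) auto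
    then show "length (P @ R) = 2 \<longrightarrow> (P @ R) ! 1 \<noteq> mt G ((P @ R) ! 0)" by blast
  qed
  then show False using nG unfolding nopc_def by blast
qed

end

definition goodg :: "('a,'d) mg \<Rightarrow> bool" where
  "goodg G \<longleftrightarrow> (wfg G \<and> vx G \<noteq> {} \<and> nopc G \<longrightarrow> (\<exists>z\<in>vx G. sepv G z))"

definition smaller :: "('a,'d) mg \<Rightarrow> ('a,'d) mg \<Rightarrow> bool" where
  "smaller H G \<longleftrightarrow> card (vx H) < card (vx G) \<or> (card (vx H) = card (vx G) \<and> card (dt H) < card (dt G))"

definition outd :: "('a,'d) mg \<Rightarrow> 'a \<Rightarrow> 'd set" where
  "outd G w = {d \<in> dt G. tv G d = w}"

lemma nopc_sub: assumes "nopc G" "dt H \<subseteq> dt G" "tv H = tv G" "mt H = mt G" "cl H = cl G"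
  shows "nopc H"
  using assms unfolding nopc_def pccyc_def lnk_def hv_def by auto

context rp begin
lemma H_cyc_old: assumes "pccyc H Z" "x \<notin> set Z" "y \<notin> set Z" shows "pccyc G Z"
proof -
  have "set Z \<subseteq> dt H" using assms unfolding pccyc_def by auto
  then have old: "\<And>d. d \<in> set Z \<Longrightarrow> d \<in> dt H \<and> d \<noteq> x \<and> d \<noteq> y" using assms by auto
  show ?thesis
  proof (rule pccyc_transfer[OF assms(1)])
    show "set Z \<subseteq> dt G" using old H_old(1) by blast
    fix d assume "d \<in> set Z"
    then have "d \<in> dt H" "d \<noteq> x" "d \<noteq> y" using old by auto
    then show "tv G d = tv H d \<and> hv G d = hv H d \<and> cl G d = cl H d \<and> mt G d = mt H d \<and>
      cl G (mt H d) = cl H (mt H d)" using H_old[of d] by simp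
  qed
qed
end

locale mce =
  fixes G :: "('a,'d) mg"
  assumes inf: "infinite (UNIV :: 'd set)"
    and wf: "wfg G" and ne: "vx G \<noteq> {}" and np: "nopc G" and nosep: "\<And>z. z \<in> vx G \<Longrightarrow> \<not> sepv G z"
    and IH: "\<And>H::('a,'d) mg. smaller H G \<Longrightarrow> goodg H"
begin

lemma finV: "finite (vx G)" and finD: "finite (dt G)" using wf unfolding wfg_def by auto

lemma fresh2: obtains x y where "x \<notin> dt G" "y \<notin> dt G" "x \<noteq> y"
proof -
  obtain x where x: "x \<notin> dt G" using ex_new_if_finite[OF inf finD] by blast
  obtain y where y: "y \<notin> insert x (dt G)" using ex_new_if_finite[OF inf] finD by blast
  show ?thesis using that[of x y] x y by auto
qed

lemma repl_false:
  assumes X: "X \<subseteq> vx G" "X \<noteq> {}" and sv: "s \<in> vx G" "v \<in> vx G" "s \<notin> X" "v \<notin> X" "s \<noteq> v"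
    and R1: "\<And>d. d \<in> dt G \<Longrightarrow> tv G d \<in> X \<Longrightarrow> hv G d \<in> X \<union> {s, v}"
    and R2s: "\<And>d. d \<in> dt G \<Longrightarrow> tv G d = s \<Longrightarrow> hv G d \<in> X \<Longrightarrow> cl G d = a"
    and R2v: "\<And>d. d \<in> dt G \<Longrightarrow> tv G d = v \<Longrightarrow> hv G d \<in> X \<Longrightarrow> cl G d = b"
    and P: "pcpath G P s v X"
  shows False
proof -
  obtain x y where xy: "x \<notin> dt G" "y \<notin> dt G" "x \<noteq> y" by (rule fresh2)
  interpret r: rp G X s v a b x y
    by (unfold_locales) (use wf X sv R1 xy in auto)
  have sm: "smaller r.H G" using r.H_card[OF X(2)] unfolding smaller_def by simp
  have "wfg r.H" by (rule r.H_wf)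
  moreover have "vx r.H \<noteq> {}" using r.H_simps(1) sv by auto
  moreover have "nopc r.H" by (rule r.H_nopc[OF R2s R2v P np])
  ultimately obtain z where z: "z \<in> vx r.H" "sepv r.H z" using IH[OF sm] unfolding goodg_def by blast
  have zG: "z \<in> vx G" using z(1) r.H_simps(1) by auto
  show False
  proof (cases "z = s")
    case True then show ?thesis using r.H_sep_s[OF R2s] z nosep zG by auto
  next
    case zs: False
    show ?thesis
    proof (cases "z = v")
      case True then show ?thesis using r.H_sep_v[OF R2v] z nosep zG by auto
    next
      case False then show ?thesis using r.H_sep_other[OF z(1) zs False z(2)] nosep zG by auto
    qed
  qed
qed

lemma connected:
  assumes z: "z \<in> vx G" and w: "w \<in> vx G" "w \<noteq> z" and w': "w' \<in> vx G" "w' \<noteq> z"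
  shows "conn G (vx G - {z}) w w'"
proof -
  obtain d1 d2 where d: "d1 \<in> dt G" "d2 \<in> dt G" "tv G d1 = z" "tv G d2 = z"
    and c12: "conn G (vx G - {z}) (hv G d1) (hv G d2)" and cl12: "cl G d1 \<noteq> cl G d2"
    using nosep[OF z] unfolding sepv_def by blast
  define h1 where "h1 = hv G d1"
  define C where "C = {w \<in> vx G - {z}. conn G (vx G - {z}) h1 w}"
  define W where "W = insert z C"
  have h1C: "h1 \<in> C" unfolding C_def h1_def using wfgD(4,5)[OF wf d(1)] d(3) by auto
  have h2C: "hv G d2 \<in> C" unfolding C_def h1_def using wfgD(4,5)[OF wf d(2)] d(4) c12 by auto
  have CV: "C \<subseteq> vx G - {z}" unfolding C_def by auto
  have allC: "vx G - {z} \<subseteq> C"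
  proof (rule ccontr)
    assume "\<not> vx G - {z} \<subseteq> C"
    then have WV: "W \<subset> vx G" using CV z unfolding W_def by auto
    define H where "H = restr G W"
    have WsubV: "W \<subseteq> vx G" using WV by auto
    have sm: "smaller H G" unfolding smaller_def H_def using psubset_card_mono[OF finV WV] by simp
    have "wfg H" unfolding H_def by (rule wfg_restr[OF wf WsubV])
    moreover have "vx H \<noteq> {}" unfolding H_def W_def by simp
    moreover have "nopc H" unfolding H_def by (rule nopc_sub[OF np]) auto
    ultimately obtain y where y: "y \<in> W" "sepv H y" using IH[OF sm] unfolding goodg_def H_def by auto
    show False
    proof (cases "y = z")
      case True
      have inH: "d1 \<in> dt H" "d2 \<in> dt H" using h1C h2C d unfolding H_def W_def h1_def by auto
      have "conn G C h1 (hv G d2)" using conn_comp[OF c12[folded h1_def]] unfolding C_def by simp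
      moreover have "adj H (vx H - {z}) a b" if "adj G C a b" for a b
        using that CV unfolding adj_def H_def W_def by auto
      ultimately have "conn H (vx H - {z}) h1 (hv G d2)" using conn_mono_adj by metis
      then have "cl H d1 = cl H d2" using sepvD[OF y(2)[unfolded True] inH] d unfolding H_def h1_def by simp
      then show False using cl12 unfolding H_def by simp
    next
      case False
      then have yC: "y \<in> C" using y(1) unfolding W_def by auto
      have WW: "vx G - (vx G - W) = W" using WsubV by auto
      have ex: "ext G (vx G - W) H" using ext_restr[OF wf, of "vx G - W"] unfolding H_def WW .
      have XP: "hv G d \<in> (vx G - W) \<union> {z}" if "d \<in> dt G" "tv G d \<in> vx G - W" for d
      proof (rule ccontr)
        assume "hv G d \<notin> (vx G - W) \<union> {z}"
        then have hC: "hv G d \<in> C" using wfgD(5)[OF wf that(1)] unfolding W_def by auto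
        have tz: "tv G d \<in> vx G - {z}" using that unfolding W_def by auto
        have "adj G (vx G - {z}) (hv G d) (tv G d)"
          using hC CV tz wfgD(1,6,7)[OF wf that(1)] unfolding adj_def by auto
        then have "tv G d \<in> C" using hC tz unfolding C_def by (auto intro: rtranclp.rtrancl_into_rtrancl)
        then show False using that(2) unfolding W_def by auto
      qed
      have "sepv G y"
      proof (rule sep_lift[OF wf ex XP])
        show "conn H (vx H - {y}) p q" if "p \<in> {z} - {y}" "q \<in> {z} - {y}" for p q using that by auto
      qed (use yC False y(2) in \<open>auto simp: W_def\<close>)
      then show False using nosep yC CV by auto
    qed
  qed
  have "conn G (vx G - {z}) h1 w" "conn G (vx G - {z}) h1 w'" using allC w w' unfolding C_def by auto
  then show ?thesis using conn_sym[OF wf] by (meson rtranclp_trans)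
qed

lemma multi: assumes "z \<in> vx G"
  obtains d1 d2 where "d1 \<in> dt G" "d2 \<in> dt G" "tv G d1 = z" "tv G d2 = z" "cl G d1 \<noteq> cl G d2"
  using nosep[OF assms] unfolding sepv_def by blast

end

context mce begin

lemma deg3: assumes u: "u \<in> vx G" shows "3 \<le> card (outd G u) \<or> card (vx G) = 2"
proof (rule ccontr)
  assume A: "\<not> (3 \<le> card (outd G u) \<or> card (vx G) = 2)"
  obtain d1 d2 where d: "d1 \<in> dt G" "d2 \<in> dt G" "tv G d1 = u" "tv G d2 = u" "cl G d1 \<noteq> cl G d2"
    using multi[OF u] by blast
  have fo: "finite (outd G u)" using finD unfolding outd_def by auto
  have sub: "{d1, d2} \<subseteq> outd G u" using d unfolding outd_def by auto
  have ne: "d1 \<noteq> d2" using d by auto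
  have "card {d1, d2} = 2" using ne by simp
  then have "card (outd G u) \<ge> 2" using card_mono[OF fo sub] by simp
  then have "card (outd G u) = 2" using A by simp
  then have O: "outd G u = {d1, d2}" using card_subset_eq[OF fo sub] \<open>card {d1,d2} = 2\<close> by simp
  have outu: "d \<in> {d1, d2}" if "d \<in> dt G" "tv G d = u" for d using O that unfolding outd_def by blast
  show False
  proof (cases "hv G d1 = hv G d2")
    case False
    define s where "s = hv G d2"
    define v where "v = hv G d1"
    have m2: "mt G d2 \<in> dt G" "tv G (mt G d2) = s" "hv G (mt G d2) = u" "mt G (mt G d2) = d2"
      using wfgD(1,2,6,7)[OF wf d(2)] d(4) unfolding s_def by auto
    have hv_ne: "s \<noteq> u" "v \<noteq> u" using wfgD(4)[OF wf d(1)] wfgD(4)[OF wf d(2)] d unfolding s_def v_def by auto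
    show False
    proof (rule repl_false[of "{u}" s v "cl G (mt G d2)" "cl G (mt G d1)" "[mt G d2, d1]"])
      show "{u} \<subseteq> vx G" "{u} \<noteq> {}" using u by auto
      show "s \<in> vx G" "v \<in> vx G" using wfgD(5)[OF wf d(1)] wfgD(5)[OF wf d(2)] unfolding s_def v_def by auto
      show "s \<notin> {u}" "v \<notin> {u}" "s \<noteq> v" using hv_ne False unfolding s_def v_def by auto
      show "hv G d \<in> {u} \<union> {s, v}" if "d \<in> dt G" "tv G d \<in> {u}" for d
        using outu[of d] that unfolding s_def v_def by auto
      show "cl G d = cl G (mt G d2)" if "d \<in> dt G" "tv G d = s" "hv G d \<in> {u}" for d
      proof -
        have "mt G d \<in> {d1, d2}" using outu[of "mt G d"] wfgD(1,7)[OF wf that(1)] that(3) by auto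
        moreover have "hv G (mt G d) = s" using wfgD(6)[OF wf that(1)] that(2) by simp
        ultimately have "mt G d = d2" using False unfolding s_def by auto
        then have "d = mt G d2" using wfgD(2)[OF wf that(1)] by metis
        then show ?thesis by simp
      qed
      show "cl G d = cl G (mt G d1)" if "d \<in> dt G" "tv G d = v" "hv G d \<in> {u}" for d
      proof -
        have "mt G d \<in> {d1, d2}" using outu[of "mt G d"] wfgD(1,7)[OF wf that(1)] that(3) by auto
        moreover have "hv G (mt G d) = v" using wfgD(6)[OF wf that(1)] that(2) by simp
        ultimately have "mt G d = d1" using False unfolding v_def by auto
        then have "d = mt G d1" using wfgD(2)[OF wf that(1)] by metis
        then show ?thesis by simp
      qed
      show "pcpath G [mt G d2, d1] s v {u}"
        unfolding pcpath_def using m2 d hv_ne unfolding lnk_def v_def by auto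
    qed
  next
    case True
    define v where "v = hv G d1"
    have vV: "v \<in> vx G" "v \<noteq> u" using wfgD(4,5)[OF wf d(1)] d unfolding v_def by auto
    have "vx G \<subseteq> {u, v}"
    proof
      fix w assume w: "w \<in> vx G"
      show "w \<in> {u, v}"
      proof (rule ccontr)
        assume "w \<notin> {u, v}"
        then have c: "conn G (vx G - {v}) u w" "u \<noteq> w" using connected[OF vV(1) u _ w] vV by auto
        then obtain w1 where "adj G (vx G - {v}) u w1" by (metis converse_rtranclpE)
        then obtain g where g: "g \<in> dt G" "tv G g = u" "hv G g \<noteq> v" unfolding adj_def by auto
        then show False using outu[OF g(1,2)] True unfolding v_def by auto
      qed
    qed
    then have "vx G = {u, v}" using u vV by auto
    then show False using A vV by simp
  qed
qed

lemma not2: "card (vx G) \<noteq> 2"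
proof
  assume "card (vx G) = 2"
  then obtain u v where V: "vx G = {u, v}" "u \<noteq> v" by (meson card_2_iff)
  have hvu: "hv G d = v" if "d \<in> dt G" "tv G d = u" for d
    using wfgD(4,5)[OF wf that(1)] that V by auto
  have hvv: "hv G d = u" if "d \<in> dt G" "tv G d = v" for d
    using wfgD(4,5)[OF wf that(1)] that V by auto
  obtain p q where pq: "p \<in> dt G" "q \<in> dt G" "tv G p = u" "tv G q = u" "cl G p \<noteq> cl G q"
    using multi[of u] V by auto
  obtain r1 r2 where r: "r1 \<in> dt G" "r2 \<in> dt G" "tv G r1 = v" "tv G r2 = v" "cl G r1 \<noteq> cl G r2"
    using multi[of v] V by auto
  have "\<exists>p' q'. p' \<in> dt G \<and> q' \<in> dt G \<and> tv G p' = u \<and> tv G q' = u \<and> cl G p' \<noteq> cl G q' \<and>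
      cl G (mt G p') \<noteq> cl G (mt G q')"
  proof (cases "cl G (mt G p) \<noteq> cl G (mt G q)")
    case True then show ?thesis using pq by blast
  next
    case False
    obtain r where rr: "r \<in> dt G" "tv G r = v" "cl G r \<noteq> cl G (mt G p)" using r by metis
    have mr: "mt G r \<in> dt G" "tv G (mt G r) = u" "mt G (mt G r) = r"
      using wfgD(1,2,7)[OF wf rr(1)] hvv[OF rr(1,2)] by auto
    show ?thesis
    proof (cases "cl G (mt G r) \<noteq> cl G p")
      case True then show ?thesis using pq mr rr by (intro exI[of _ p] exI[of _ "mt G r"]) auto
    next
      case False
      then show ?thesis using pq mr rr \<open>\<not> cl G (mt G p) \<noteq> cl G (mt G q)\<close>
        by (intro exI[of _ q] exI[of _ "mt G r"]) auto
    qed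
  qed
  then obtain p' q' where pq': "p' \<in> dt G" "q' \<in> dt G" "tv G p' = u" "tv G q' = u" "cl G p' \<noteq> cl G q'"
      "cl G (mt G p') \<noteq> cl G (mt G q')" by blast
  have mq: "mt G q' \<in> dt G" "tv G (mt G q') = v" "hv G (mt G q') = u" "mt G (mt G q') = q'"
    using wfgD(1,2,6,7)[OF wf pq'(2)] hvu[OF pq'(2,4)] pq'(4) by auto
  have nn: "mt G q' \<noteq> mt G p'" using pq'(5) wfgD(2)[OF wf pq'(1)] mq(4) by metis
  have "pccyc G [p', mt G q']"
    unfolding pccyc_def lnk_def using pq' mq V hvu[OF pq'(1,3)] nn by auto
  then show False using np unfolding nopc_def by blast
qed

definition oddd :: "'a \<Rightarrow> 'd \<Rightarrow> bool" where
  "oddd w d \<longleftrightarrow> d \<in> dt G \<and> tv G d = w \<and> (\<exists>c. c \<noteq> cl G d \<and> (\<forall>d'\<in>dt G. tv G d' = w \<longrightarrow> d' \<noteq> d \<longrightarrow> cl G d' = c))"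

definition t2 :: "'d \<Rightarrow> 'a \<Rightarrow> bool" where
  "t2 d s \<longleftrightarrow> s \<in> vx G \<and> s \<noteq> tv G d \<and> s \<noteq> hv G d \<and>
     \<not> conn (deledge G d) (vx G - {s}) (tv G d) (hv G d) \<and>
     (\<forall>w\<in>vx G - {s}. conn (deledge G d) (vx G - {s}) (tv G d) w \<or> conn (deledge G d) (vx G - {s}) (hv G d) w) \<and>
     (\<exists>\<alpha> \<beta>. \<alpha> \<noteq> \<beta> \<and> (\<forall>g\<in>dt G. tv G g = s \<longrightarrow>
         (conn (deledge G d) (vx G - {s}) (tv G d) (hv G g) \<longrightarrow> cl G g = \<alpha>) \<and>
         (conn (deledge G d) (vx G - {s}) (hv G d) (hv G g) \<longrightarrow> cl G g = \<beta>)))"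

lemma deledge_mt: "d \<in> dt G \<Longrightarrow> deledge G (mt G d) = deledge G d"
  unfolding deledge_def using wfgD(2)[OF wf] by (auto simp: insert_commute)

lemma adj_deledge: assumes "d \<in> dt G" "tv G d \<notin> S \<or> hv G d \<notin> S" "adj G S a b"
  shows "adj (deledge G d) S a b"
proof -
  obtain g where g: "g \<in> dt G" "tv G g = a" "hv G g = b" "a \<in> S" "b \<in> S" using assms(3) unfolding adj_def by auto
  have "g \<noteq> d" using g assms(2) by auto
  moreover have "g \<noteq> mt G d" using g assms(2) wfgD(6,7)[OF wf assms(1)] by auto
  ultimately show ?thesis using g unfolding adj_def by auto
qed

lemma odd_from_sep: assumes d: "d \<in> dt G" and sp: "sepv (deledge G d) (tv G d)"
  shows "oddd (tv G d) d"
proof -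
  define u where "u = tv G d"
  have uV: "u \<in> vx G" using wfgD(3)[OF wf d] unfolding u_def .
  have same: "cl G e1 = cl G e2" if e: "e1 \<in> dt G" "e2 \<in> dt G" "tv G e1 = u" "tv G e2 = u" "e1 \<noteq> d" "e2 \<noteq> d" for e1 e2
  proof -
    have nm: "e1 \<noteq> mt G d" "e2 \<noteq> mt G d" using e wfgD(4)[OF wf d] unfolding u_def hv_def by auto
    have hv1: "hv G e1 \<in> vx G" "hv G e1 \<noteq> u" "hv G e2 \<in> vx G" "hv G e2 \<noteq> u"
      using wfgD(4,5)[OF wf e(1)] wfgD(4,5)[OF wf e(2)] e by auto
    have "conn G (vx G - {u}) (hv G e1) (hv G e2)" using connected[OF uV hv1] .
    then have "conn (deledge G d) (vx G - {u}) (hv G e1) (hv G e2)"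
      by (rule conn_mono_adj[rotated]) (rule adj_deledge[OF d], auto simp: u_def)
    then show ?thesis using sepvD[OF sp, of e1 e2] e nm unfolding u_def by auto
  qed
  obtain e1 e2 where ee: "e1 \<in> dt G" "e2 \<in> dt G" "tv G e1 = u" "tv G e2 = u" "cl G e1 \<noteq> cl G e2"
    using multi[OF uV] by blast
  have "\<exists>e. e \<in> dt G \<and> tv G e = u \<and> e \<noteq> d \<and> cl G e \<noteq> cl G d"
  proof (cases "e1 = d")
    case True then show ?thesis using ee by (intro exI[of _ e2]) auto
  next
    case False
    then have "e2 = d" using same[OF ee(1-4) False] ee(5) by blast
    then show ?thesis using ee False by (intro exI[of _ e1]) auto
  qed
  then obtain e where e: "e \<in> dt G" "tv G e = u" "e \<noteq> d" "cl G e \<noteq> cl G d" by blast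
  have "\<forall>d'\<in>dt G. tv G d' = tv G d \<longrightarrow> d' \<noteq> d \<longrightarrow> cl G d' = cl G e"
  proof (intro ballI impI)
    fix d' assume "d' \<in> dt G" "tv G d' = tv G d" "d' \<noteq> d"
    then show "cl G d' = cl G e" using same[of d' e] e unfolding u_def by simp
  qed
  moreover have "cl G e \<noteq> cl G d" using e(4) .
  ultimately show ?thesis unfolding oddd_def using d by blast
qed

end

context mce begin

lemma edge_cases: assumes d: "d \<in> dt G"
  shows "oddd (tv G d) d \<or> oddd (hv G d) (mt G d) \<or> (\<exists>s. t2 d s)"
proof -
  define Ge where "Ge = deledge G d"
  have sub: "dt Ge \<subset> dt G" using d unfolding Ge_def by auto
  have sm: "smaller Ge G" unfolding smaller_def Ge_def using psubset_card_mono[OF finD sub[unfolded Ge_def]] by simp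
  have "wfg Ge" unfolding Ge_def by (rule wfg_deledge[OF wf d])
  moreover have "vx Ge \<noteq> {}" using ne unfolding Ge_def by simp
  moreover have "nopc Ge" unfolding Ge_def by (rule nopc_sub[OF np]) auto
  ultimately obtain y where y: "y \<in> vx G" "sepv Ge y" using IH[OF sm] unfolding goodg_def Ge_def by auto
  show ?thesis
  proof (cases "y = tv G d")
    case True then show ?thesis using odd_from_sep[OF d] y unfolding Ge_def by simp
  next
    case yu: False
    show ?thesis
    proof (cases "y = hv G d")
      case True
      have md: "mt G d \<in> dt G" "tv G (mt G d) = hv G d" using wfgD(1,7)[OF wf d] by auto
      have "sepv (deledge G (mt G d)) (tv G (mt G d))" using y True md deledge_mt[OF d] unfolding Ge_def by simp
      then have "oddd (tv G (mt G d)) (mt G d)" by (rule odd_from_sep[OF md(1)])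
      then show ?thesis using md by simp
    next
      case yv: False
      define S where "S = vx G - {y}"
      define u where "u = tv G d"
      define v where "v = hv G d"
      have uv: "u \<in> S" "v \<in> S" "u \<noteq> v" using wfgD(3,4,5)[OF wf d] yu yv unfolding S_def u_def v_def by auto
      have inGe: "g \<in> dt Ge" if "g \<in> dt G" "tv G g = y" for g
      proof -
        have "g \<noteq> d" using that yu by auto
        moreover have "g \<noteq> mt G d" using that yv wfgD(7)[OF wf d] by auto
        ultimately show ?thesis using that unfolding Ge_def by simp
      qed
      have samecol: "cl G g = cl G g'" if "g \<in> dt G" "g' \<in> dt G" "tv G g = y" "tv G g' = y"
        "conn Ge S (hv G g) (hv G g')" for g g'
        using sepvD[OF y(2) inGe[OF that(1,3)] inGe[OF that(2,4)]] that unfolding Ge_def S_def by simp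
      have cover: "conn Ge S u w \<or> conn Ge S v w" if "w \<in> S" for w
      proof -
        have "conn G S u w" using connected[OF y(1), of u w] uv that unfolding S_def by auto
        then show ?thesis
        proof (induction rule: rtranclp_induct)
          case base then show ?case by simp
        next
          case (step w1 w2)
          obtain g where g: "g \<in> dt G" "tv G g = w1" "hv G g = w2" "w1 \<in> S" "w2 \<in> S"
            using step(2) unfolding adj_def by auto
          show ?case
          proof (cases "g = d")
            case True then show ?thesis using g unfolding v_def by simp
          next
            case gd: False
            show ?thesis
            proof (cases "g = mt G d")
              case True then show ?thesis using g wfgD(6)[OF wf d] unfolding u_def by simp
            next
              case False
              then have "adj Ge S w1 w2" using g gd unfolding adj_def Ge_def by auto
              then show ?thesis using step(3) by (meson rtranclp.rtrancl_into_rtrancl)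
            qed
          qed
        qed
      qed
      have wfe: "wfg Ge" unfolding Ge_def by (rule wfg_deledge[OF wf d])
      obtain d1 d2 where dd: "d1 \<in> dt G" "d2 \<in> dt G" "tv G d1 = y" "tv G d2 = y" "cl G d1 \<noteq> cl G d2"
        using multi[OF y(1)] by blast
      have hS: "hv G d1 \<in> S" "hv G d2 \<in> S" using wfgD(4,5)[OF wf dd(1)] wfgD(4,5)[OF wf dd(2)] dd
        unfolding S_def by auto
      have ncuv: "\<not> conn Ge S u v"
      proof
        assume cuv: "conn Ge S u v"
        have "conn Ge S u (hv G d1)" "conn Ge S u (hv G d2)" using cover[OF hS(1)] cover[OF hS(2)] cuv
          by (meson rtranclp_trans)+
        then have "conn Ge S (hv G d1) (hv G d2)" using conn_sym[OF wfe] by (meson rtranclp_trans)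
        then show False using samecol[OF dd(1-4)] dd(5) by simp
      qed
      have ab: "\<exists>\<alpha> \<beta>. \<alpha> \<noteq> \<beta> \<and> (\<forall>g\<in>dt G. tv G g = y \<longrightarrow>
         (conn Ge S u (hv G g) \<longrightarrow> cl G g = \<alpha>) \<and> (conn Ge S v (hv G g) \<longrightarrow> cl G g = \<beta>))"
      proof -
        have key: "\<exists>\<alpha> \<beta>. \<alpha> \<noteq> \<beta> \<and> (\<forall>g\<in>dt G. tv G g = y \<longrightarrow>
           (conn Ge S u (hv G g) \<longrightarrow> cl G g = \<alpha>) \<and> (conn Ge S v (hv G g) \<longrightarrow> cl G g = \<beta>))"
          if "e1 \<in> dt G" "e2 \<in> dt G" "tv G e1 = y" "tv G e2 = y" "cl G e1 \<noteq> cl G e2"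
            "conn Ge S u (hv G e1)" "conn Ge S v (hv G e2)" for e1 e2
        proof (intro exI conjI ballI impI)
          show "cl G e1 \<noteq> cl G e2" using that(5) .
          fix g assume g: "g \<in> dt G" "tv G g = y"
          {
            assume "conn Ge S u (hv G g)"
            then have "conn Ge S (hv G g) (hv G e1)" using that(6) conn_sym[OF wfe] by (meson rtranclp_trans)
            then show "cl G g = cl G e1" using samecol[OF g(1) that(1) g(2) that(3)] by simp
          next
            assume "conn Ge S v (hv G g)"
            then have "conn Ge S (hv G g) (hv G e2)" using that(7) conn_sym[OF wfe] by (meson rtranclp_trans)
            then show "cl G g = cl G e2" using samecol[OF g(1) that(2) g(2) that(4)] by simp
          }
        qed
        have n12: "\<not> conn Ge S (hv G d1) (hv G d2)" using samecol[OF dd(1-4)] dd(5) by blast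
        show ?thesis
        proof (cases "conn Ge S u (hv G d1)")
          case True
          have "\<not> conn Ge S u (hv G d2)"
            using True n12 conn_sym[OF wfe] by (meson rtranclp_trans)
          then have "conn Ge S v (hv G d2)" using cover[OF hS(2)] by blast
          then show ?thesis using key[OF dd True] by blast
        next
          case False
          then have c1: "conn Ge S v (hv G d1)" using cover[OF hS(1)] by blast
          have "\<not> conn Ge S v (hv G d2)"
            using c1 n12 conn_sym[OF wfe] by (meson rtranclp_trans)
          then have "conn Ge S u (hv G d2)" using cover[OF hS(2)] by blast
          then show ?thesis using key[OF dd(2,1,4,3) dd(5)[symmetric] _ c1] by blast
        qed
      qed
      have "t2 d y" unfolding t2_def
        using y(1) yu yv ncuv cover ab unfolding S_def u_def v_def Ge_def by blast
      then show ?thesis by blast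
    qed
  qed
qed

end

context mce begin

lemma t2_mt: assumes d: "d \<in> dt G" and t: "t2 d s" shows "t2 (mt G d) s"
proof -
  have e: "deledge G (mt G d) = deledge G d" "tv G (mt G d) = hv G d" "hv G (mt G d) = tv G d"
    using deledge_mt[OF d] wfgD(6,7)[OF wf d] by auto
  have wfe: "wfg (deledge G d)" by (rule wfg_deledge[OF wf d])
  have nc: "\<not> conn (deledge G d) (vx G - {s}) (hv G d) (tv G d)"
    using t conn_sym[OF wfe] unfolding t2_def by blast
  obtain \<alpha> \<beta> where ab: "\<alpha> \<noteq> \<beta>" "\<forall>g\<in>dt G. tv G g = s \<longrightarrow>
         (conn (deledge G d) (vx G - {s}) (tv G d) (hv G g) \<longrightarrow> cl G g = \<alpha>) \<and>
         (conn (deledge G d) (vx G - {s}) (hv G d) (hv G g) \<longrightarrow> cl G g = \<beta>)"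
    using t unfolding t2_def by blast
  show ?thesis unfolding t2_def e
  proof (intro conjI)
    show "s \<in> vx G" "s \<noteq> hv G d" "s \<noteq> tv G d" using t unfolding t2_def by auto
    show "\<not> conn (deledge G d) (vx G - {s}) (hv G d) (tv G d)" by (rule nc)
    show "\<forall>w\<in>vx G - {s}. conn (deledge G d) (vx G - {s}) (hv G d) w \<or> conn (deledge G d) (vx G - {s}) (tv G d) w"
      using t unfolding t2_def by blast
    show "\<exists>\<alpha> \<beta>. \<alpha> \<noteq> \<beta> \<and> (\<forall>g\<in>dt G. tv G g = s \<longrightarrow>
         (conn (deledge G d) (vx G - {s}) (hv G d) (hv G g) \<longrightarrow> cl G g = \<alpha>) \<and>
         (conn (deledge G d) (vx G - {s}) (tv G d) (hv G g) \<longrightarrow> cl G g = \<beta>))"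
      using ab by (intro exI[of _ \<beta>] exI[of _ \<alpha>]) auto
  qed
qed

lemma t2_side:
  assumes d: "d \<in> dt G" and t: "t2 d s"
    and cs: "card {w. conn (deledge G d) (vx G - {s}) (tv G d) w} = 1 \<or>
             2 \<le> card {w. conn (deledge G d) (vx G - {s}) (hv G d) w}"
  shows False
proof -
  define Ge where "Ge = deledge G d"
  define S where "S = vx G - {s}"
  define u where "u = tv G d"
  define v where "v = hv G d"
  define Ku where "Ku = {w. conn Ge S u w}"
  define Kv where "Kv = {w. conn Ge S v w}"
  have wfe: "wfg Ge" unfolding Ge_def by (rule wfg_deledge[OF wf d])
  have sV: "s \<in> vx G" "s \<noteq> u" "s \<noteq> v" and ncuv: "\<not> conn Ge S u v"
    and cover: "\<And>w. w \<in> S \<Longrightarrow> w \<in> Ku \<or> w \<in> Kv"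
    using t unfolding t2_def Ge_def S_def u_def v_def Ku_def Kv_def by auto
  obtain \<alpha> \<beta> where ab: "\<alpha> \<noteq> \<beta>"
    "\<And>g. g \<in> dt G \<Longrightarrow> tv G g = s \<Longrightarrow> hv G g \<in> Ku \<Longrightarrow> cl G g = \<alpha>"
    "\<And>g. g \<in> dt G \<Longrightarrow> tv G g = s \<Longrightarrow> hv G g \<in> Kv \<Longrightarrow> cl G g = \<beta>"
    using t unfolding t2_def Ge_def S_def u_def v_def Ku_def Kv_def by blast
  have uvV: "u \<in> vx G" "v \<in> vx G" "u \<noteq> v" using wfgD(3,4,5)[OF wf d] unfolding u_def v_def by auto
  have uS: "u \<in> S" "v \<in> S" using uvV sV unfolding S_def by auto
  have KuS: "Ku \<subseteq> S"
  proof
    fix w assume "w \<in> Ku"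
    then have "conn Ge S u w" unfolding Ku_def by simp
    then show "w \<in> S" using uS conn_in(2) by (cases "u = w") auto
  qed
  have KvS: "Kv \<subseteq> S"
  proof
    fix w assume "w \<in> Kv"
    then have "conn Ge S v w" unfolding Kv_def by simp
    then show "w \<in> S" using uS conn_in(2) by (cases "v = w") auto
  qed
  have uKu: "u \<in> Ku" and vKv: "v \<in> Kv" unfolding Ku_def Kv_def by auto
  have disj: "Ku \<inter> Kv = {}"
  proof (rule ccontr)
    assume "Ku \<inter> Kv \<noteq> {}"
    then obtain w where "conn Ge S u w" "conn Ge S v w" unfolding Ku_def Kv_def by auto
    then have "conn Ge S u v" using conn_sym[OF wfe] by (meson rtranclp_trans)
    then show False using ncuv by simp
  qed
  have Scov: "S = Ku \<union> Kv" using cover KuS KvS by auto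
  have finK: "finite Ku" "finite Kv" using KuS KvS finV unfolding S_def by (auto intro: finite_subset)
  have sK: "s \<notin> Ku" "s \<notin> Kv" using KuS KvS unfolding S_def by auto
  have vKu: "v \<notin> Ku" "u \<notin> Kv" using disj uKu vKv by auto
  have F2: "hv G g \<in> Ku \<union> {s} \<or> g = d" if g: "g \<in> dt G" "tv G g \<in> Ku" for g
  proof (cases "hv G g = s \<or> g = d")
    case True then show ?thesis by auto
  next
    case False
    have hS: "hv G g \<in> S" using wfgD(5)[OF wf g(1)] False unfolding S_def by auto
    have "g \<noteq> mt G d" using g(2) vKu wfgD(7)[OF wf d] unfolding v_def by auto
    then have "g \<in> dt Ge" using g False unfolding Ge_def by auto
    then have "adj Ge S (tv G g) (hv G g)" using hS g KuS unfolding adj_def Ge_def by auto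
    then have "hv G g \<in> Ku" using g(2) unfolding Ku_def by (auto intro: rtranclp.rtrancl_into_rtrancl)
    then show ?thesis by simp
  qed
  have F2v: "hv G g \<in> Kv \<union> {s} \<or> g = mt G d" if g: "g \<in> dt G" "tv G g \<in> Kv" for g
  proof (cases "hv G g = s \<or> g = mt G d")
    case True then show ?thesis by auto
  next
    case False
    have hS: "hv G g \<in> S" using wfgD(5)[OF wf g(1)] False unfolding S_def by auto
    have "g \<noteq> d" using g(2) vKu unfolding u_def by auto
    then have "g \<in> dt Ge" using g False unfolding Ge_def by auto
    then have "adj Ge S (tv G g) (hv G g)" using hS g KvS unfolding adj_def Ge_def by auto
    then have "hv G g \<in> Kv" using g(2) unfolding Kv_def by (auto intro: rtranclp.rtrancl_into_rtrancl)
    then show ?thesis by simp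
  qed
  have vdart: "g = mt G d" if g: "g \<in> dt G" "tv G g = v" "hv G g \<in> Ku" for g
  proof -
    have mg: "mt G g \<in> dt G" "tv G (mt G g) \<in> Ku" "hv G (mt G g) = v"
      using wfgD(1,6,7)[OF wf g(1)] g by auto
    have "mt G g = d" using F2[OF mg(1,2)] mg(3) vKu sV by auto
    then show ?thesis using wfgD(2)[OF wf g(1)] by metis
  qed
  have g0: "\<exists>g0. g0 \<in> dt G \<and> tv G g0 = s \<and> hv G g0 \<in> Ku"
  proof (rule ccontr)
    assume A: "\<not> ?thesis"
    obtain e1 e2 where ee: "e1 \<in> dt G" "e2 \<in> dt G" "tv G e1 = s" "tv G e2 = s" "cl G e1 \<noteq> cl G e2"
      using multi[OF sV(1)] by blast
    have "hv G e1 \<in> S" "hv G e2 \<in> S" using wfgD(4,5)[OF wf ee(1)] wfgD(4,5)[OF wf ee(2)] ee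
      unfolding S_def by auto
    then have "hv G e1 \<in> Kv" "hv G e2 \<in> Kv" using A ee Scov by auto
    then show False using ab(3)[OF ee(1,3)] ab(3)[OF ee(2,4)] ee(5) by simp
  qed
  then obtain g0 where g0: "g0 \<in> dt G" "tv G g0 = s" "hv G g0 \<in> Ku" by blast
  have connKu: "conn Ge Ku u a" if "a \<in> Ku" for a
  proof -
    have "conn Ge S u a" using that unfolding Ku_def by simp
    moreover have eq: "{w \<in> S. conn Ge S u w} = Ku" using KuS unfolding Ku_def by auto
    ultimately show ?thesis using conn_comp[of Ge S u a] by simp
  qed
  have P: "\<exists>P. pcpath G P s v Ku"
  proof (cases "card Ku = 1")
    case True
    then have Ku1: "Ku = {u}" using uKu by (metis card_1_singletonE singletonD)
    obtain e1 e2 where ee: "e1 \<in> dt G" "e2 \<in> dt G" "tv G e1 = u" "tv G e2 = u" "cl G e1 \<noteq> cl G e2"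
      using multi[OF uvV(1)] by blast
    have "\<exists>g. g \<in> dt G \<and> tv G g = u \<and> cl G g \<noteq> cl G d"
      using ee by (cases "cl G e1 = cl G d") auto
    then obtain g where g: "g \<in> dt G" "tv G g = u" "cl G g \<noteq> cl G d" by blast
    have gd: "g \<noteq> d" using g by auto
    have "hv G g = s" using F2[OF g(1)] g(2) Ku1 gd wfgD(4)[OF wf g(1)] by auto
    then have m: "mt G g \<in> dt G" "tv G (mt G g) = s" "hv G (mt G g) = u" "cl G (mt G (mt G g)) = cl G g"
      using wfgD(1,2,6,7)[OF wf g(1)] g(2) by auto
    have "pcpath G [mt G g, d] s v Ku"
      unfolding pcpath_def lnk_def using m d g sV Ku1 unfolding u_def v_def by auto
    then show ?thesis by blast
  next
    case False
    then have c2: "2 \<le> card Kv" using cs unfolding Ge_def S_def u_def v_def Ku_def Kv_def by blast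
    define Y where "Y = Kv - {v}"
    have Yne: "Y \<noteq> {}"
    proof
      assume "Y = {}"
      then have "Kv \<subseteq> {v}" unfolding Y_def by auto
      then have "card Kv \<le> card {v}" by (intro card_mono) auto
      then have "card Kv \<le> 1" by simp
      then show False using c2 by simp
    qed
    have YV: "Y \<subseteq> vx G" using KvS unfolding Y_def S_def by auto
    have sY: "s \<notin> Y" "v \<notin> Y" using sK unfolding Y_def by auto
    have R1Y: "hv G g \<in> Y \<union> {s, v}" if "g \<in> dt G" "tv G g \<in> Y" for g
    proof -
      have "g \<noteq> mt G d" using that wfgD(7)[OF wf d] unfolding Y_def v_def by auto
      then show ?thesis using F2v[OF that(1)] that(2) unfolding Y_def by auto
    qed
    obtain x y where xy: "x \<notin> dt G" "y \<notin> dt G" "x \<noteq> y" by (rule fresh2)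
    interpret r: rp G Y s v \<beta> "cl G (mt G d) + 1" x y
      by unfold_locales (use wf YV sV uvV sY R1Y xy in auto)
    have sm: "smaller r.H G" using r.H_card[OF Yne] unfolding smaller_def by simp
    have vxH: "vx r.H = vx G - Y" by (rule r.H_simps(1))
    have exH: "\<And>g. g \<in> dt G \<Longrightarrow> tv G g \<notin> Y \<Longrightarrow> hv G g \<notin> Y \<Longrightarrow>
      g \<in> dt r.H \<and> tv r.H g = tv G g \<and> hv r.H g = hv G g \<and> cl r.H g = cl G g"
      using r.H_ext unfolding ext_def by blast
    have KuY: "Ku \<inter> Y = {}" using disj unfolding Y_def by auto
    have connH: "conn r.H (vx r.H - {z}) u a" if "a \<in> Ku" "z \<in> {s, v}" for a z
    proof -
      have "adj r.H (vx r.H - {z}) p q" if A: "adj Ge Ku p q" for p q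
      proof -
        obtain g where g: "g \<in> dt Ge" "tv Ge g = p" "hv Ge g = q" "p \<in> Ku" "q \<in> Ku"
          using A unfolding adj_def by blast
        have "g \<in> dt G" using g(1) unfolding Ge_def by simp
        then show ?thesis using exH[of g] g KuY vxH \<open>z \<in> {s,v}\<close> sK vKu KuS unfolding adj_def Ge_def S_def
          by auto
      qed
      then show ?thesis using conn_mono_adj[OF _ connKu[OF that(1)]] by blast
    qed
    have dH: "d \<in> dt r.H" "tv r.H d = u" "hv r.H d = v" "cl r.H d = cl G d"
      using exH[OF d] sY vKu uKu KuY unfolding u_def v_def by auto
    have md: "mt G d \<in> dt G" "tv G (mt G d) = v" "hv G (mt G d) = u" using wfgD(1,6,7)[OF wf d]
      unfolding u_def v_def by auto
    have mdH: "mt G d \<in> dt r.H" "tv r.H (mt G d) = v" "hv r.H (mt G d) = u" "cl r.H (mt G d) = cl G (mt G d)"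
      using exH[OF md(1)] md sY vKu uKu KuY by auto
    have g0H: "g0 \<in> dt r.H" "tv r.H g0 = s" "hv r.H g0 = hv G g0" "cl r.H g0 = \<alpha>"
      using exH[OF g0(1)] g0 sY KuY ab(2)[OF g0] by auto
    have mg0: "mt G g0 \<in> dt G" "tv G (mt G g0) = hv G g0" "hv G (mt G g0) = s" using wfgD(1,6,7)[OF wf g0(1)] g0 by auto
    have mg0H: "mt G g0 \<in> dt r.H" "tv r.H (mt G g0) = hv G g0" "hv r.H (mt G g0) = s"
      using exH[OF mg0(1)] mg0 g0 sY KuY by auto
    have wfH: "wfg r.H" by (rule r.H_wf)
    have vsH: "s \<in> vx r.H" "v \<in> vx r.H" "u \<in> vx r.H" "hv G g0 \<in> vx r.H"
      using sV uvV sY vxH KuY g0 uKu wfgD(5)[OF wf g0(1)] by auto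
    have nosepH: "\<not> sepv r.H z" if "z \<in> vx r.H" for z
    proof
      assume sz: "sepv r.H z"
      show False
      proof (cases "z = s")
        case True
        have "conn r.H (vx r.H - {s}) u (hv G g0)" using connH[OF g0(3)] by simp
        moreover have "adj r.H (vx r.H - {s}) u v" using dH vsH sV unfolding adj_def by auto
        ultimately have "conn r.H (vx r.H - {s}) (hv G g0) v" using conn_sym[OF wfH]
          by (meson rtranclp.rtrancl_into_rtrancl)
        then have "conn r.H (vx r.H - {s}) (hv r.H g0) (hv r.H x)" using g0H r.H_simps by simp
        then have "cl r.H g0 = cl r.H x" using sepvD[OF sz[unfolded True] g0H(1) r.H_simps(2) g0H(2) r.H_simps(4)] by simp
        then show False using g0H r.H_simps ab(1) by simp
      next
        case zs: False
        show False
        proof (cases "z = v")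
          case True
          have "conn r.H (vx r.H - {v}) u (hv G g0)" using connH[OF g0(3)] by simp
          moreover have "adj r.H (vx r.H - {v}) (hv G g0) s" using mg0H vsH sV g0(3) vKu
            unfolding adj_def by auto
          ultimately have "conn r.H (vx r.H - {v}) u s" by (meson rtranclp.rtrancl_into_rtrancl)
          then have "conn r.H (vx r.H - {v}) (hv r.H (mt G d)) (hv r.H y)" using mdH r.H_simps by simp
          then have "cl r.H (mt G d) = cl r.H y"
            using sepvD[OF sz[unfolded True] mdH(1) r.H_simps(3) mdH(2) r.H_simps(5)] by simp
          then show False using mdH r.H_simps by simp
        next
          case False
          then have "sepv G z" using r.H_sep_other[OF that zs False sz] by simp
          then show False using nosep that vxH by auto
        qed
      qed
    qed
    have "\<not> nopc r.H"
    proof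
      assume "nopc r.H"
      then obtain z where "z \<in> vx r.H" "sepv r.H z" using IH[OF sm] wfH vsH unfolding goodg_def by blast
      then show False using nosepH by blast
    qed
    then obtain Z where Z: "pccyc r.H Z" unfolding nopc_def by blast
    have "\<exists>Z'. pccyc r.H Z' \<and> y \<in> set Z'"
    proof (cases "y \<in> set Z")
      case True then show ?thesis using Z by blast
    next
      case yZ: False
      show ?thesis
      proof (cases "x \<in> set Z")
        case True
        have "y \<in> set (rev (map (mt r.H) Z))" using True r.H_simps(6) by force
        then show ?thesis using pccyc_rev[OF wfH Z] by blast
      next
        case False
        then have "pccyc G Z" using r.H_cyc_old[OF Z False yZ] by simp
        then show ?thesis using np unfolding nopc_def by blast
      qed
    qed
    then obtain Z' where Z': "pccyc r.H Z'" "y \<in> set Z'" by blast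
    obtain R where C: "pccyc r.H (y # R)" using pccyc_front[OF wfH Z'] by blast
    have Rne: "R \<noteq> []" using C unfolding pccyc_def by auto
    have Rsub: "set R \<subseteq> dt r.H" using C unfolding pccyc_def by auto
    have dR: "distinct (map (tv r.H) R)" "v \<notin> tv r.H ` set R" using C r.H_simps(5) unfolding pccyc_def by auto
    have sR: "successively (lnk r.H) R" and l1: "lnk r.H y (hd R)"
      using C Rne unfolding pccyc_def by (auto simp: successively_Cons)
    have l2: "lnk r.H (last R) y" using C Rne unfolding pccyc_def by auto
    have yR: "y \<notin> set R" using dR(2) r.H_simps(5) by force
    have hdR: "tv r.H (hd R) = s" "cl r.H (hd R) \<noteq> \<beta>" using l1 r.H_simps unfolding lnk_def by auto
    have xR: "x \<notin> set R"
    proof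
      assume xR: "x \<in> set R"
      have "inj_on (tv r.H) (set R)" using dR(1) by (simp add: distinct_map)
      then have "x = hd R" using xR hd_in_set[OF Rne] hdR r.H_simps(4) by (metis inj_on_def)
      then show False using hdR r.H_simps(8) by simp
    qed
    have old: "r \<in> dt r.H" "r \<noteq> x" "r \<noteq> y" if "r \<in> set R" for r using that Rsub xR yR by auto
    note Ro = r.H_old[OF old]
    have lastR: "hv G (last R) = v" using l2 r.H_simps Ro[of "last R"] Rne unfolding lnk_def by simp
    have hdRG: "tv G (hd R) = s" "hd R \<in> dt G" using hdR Ro[of "hd R"] Rne by auto
    have len: "2 \<le> length R"
    proof (rule ccontr)
      assume A: "\<not> 2 \<le> length R"
      obtain r where R1: "R = [r]" using Rne A by (cases R; cases "tl R") auto
      have "cl G r = \<beta>" using ab(3)[of r] hdRG lastR vKv R1 by simp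
      then show False using hdR Ro[of r] R1 by simp
    qed
    have "pcpath G R s v Ku"
      unfolding pcpath_def
    proof (intro conjI)
      show "2 \<le> length R" by (rule len)
      show "set R \<subseteq> dt G" using Ro by auto
      show "successively (lnk G) R"
        using sR by (rule successively_mono) (use r.H_lnk_old old in blast)
      show "tv G (hd R) = s" "hv G (last R) = v" using hdRG lastR by auto
      have "map (tv r.H) R = map (tv G) R" using Ro by auto
      then show "distinct (map (tv G) R)" using dR(1) by metis
      show "set (map (tv G) (tl R)) \<subseteq> Ku"
      proof
        fix w assume "w \<in> set (map (tv G) (tl R))"
        then obtain r where r: "r \<in> set (tl R)" "w = tv G r" by auto
        obtain r0 rest where R0: "R = r0 # rest" using Rne by (cases R) auto
        have rR: "r \<in> set R" "r \<in> set rest" using r R0 by auto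
        have "tv G r \<noteq> s"
        proof
          assume "tv G r = s"
          moreover have "tv G r0 = s" using hdRG R0 by simp
          moreover have "tv r.H r0 \<notin> tv r.H ` set rest" using dR(1) R0 by simp
          ultimately show False using Ro[of r0] Ro[of r] rR R0 by force
        qed
        moreover have "tv G r \<noteq> v" using dR(2) Ro[of r] rR by force
        moreover have rG: "r \<in> dt G" "tv G r \<notin> Y" using Ro[of r] rR(1) by auto
        moreover have "tv G r \<in> vx G" using wfgD(3)[OF wf rG(1)] .
        ultimately show "w \<in> Ku" using r Scov unfolding S_def Y_def by auto
      qed
    qed
    then show ?thesis by blast
  qed
  then obtain P where P: "pcpath G P s v Ku" by blast
  show False
  proof (rule repl_false[of Ku s v \<alpha> "cl G (mt G d)" P])
    show "Ku \<subseteq> vx G" "Ku \<noteq> {}" using KuS uKu unfolding S_def by auto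
    show "s \<in> vx G" "v \<in> vx G" "s \<notin> Ku" "v \<notin> Ku" "s \<noteq> v" using sV uvV sK vKu by auto
    show "hv G g \<in> Ku \<union> {s, v}" if "g \<in> dt G" "tv G g \<in> Ku" for g
      using F2[OF that] unfolding v_def by auto
    show "cl G g = \<alpha>" if "g \<in> dt G" "tv G g = s" "hv G g \<in> Ku" for g using ab(2)[OF that] .
    show "cl G g = cl G (mt G d)" if "g \<in> dt G" "tv G g = v" "hv G g \<in> Ku" for g
      using vdart[OF that] by simp
  qed (rule P)
qed

lemma t2_false: assumes d: "d \<in> dt G" and t: "t2 d s" shows False
proof (cases "card {w. conn (deledge G d) (vx G - {s}) (tv G d) w} = 1 \<or>
             2 \<le> card {w. conn (deledge G d) (vx G - {s}) (hv G d) w}")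
  case True then show ?thesis using t2_side[OF d t] by blast
next
  case False
  define Kv where "Kv = {w. conn (deledge G d) (vx G - {s}) (hv G d) w}"
  have "Kv \<subseteq> vx G"
  proof
    fix w assume "w \<in> Kv"
    then have c: "conn (deledge G d) (vx G - {s}) (hv G d) w" unfolding Kv_def by simp
    show "w \<in> vx G" using conn_in(2)[OF c] wfgD(5)[OF wf d] by (cases "hv G d = w") auto
  qed
  then have "finite Kv" using finV by (rule finite_subset)
  moreover have "hv G d \<in> Kv" unfolding Kv_def by simp
  ultimately have "card Kv \<ge> 1" by (metis One_nat_def Suc_leI card_gt_0_iff empty_iff)
  then have c1: "card Kv = 1" using False unfolding Kv_def by simp
  have md: "mt G d \<in> dt G" "tv G (mt G d) = hv G d" using wfgD(1,7)[OF wf d] by auto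
  have "card {w. conn (deledge G (mt G d)) (vx G - {s}) (tv G (mt G d)) w} = 1"
    using c1 md deledge_mt[OF d] unfolding Kv_def by simp
  then show ?thesis using t2_side[OF md(1) t2_mt[OF d t]] by blast
qed

end

context mce begin

lemma all_odd: assumes d: "d \<in> dt G" shows "oddd (tv G d) d \<or> oddd (hv G d) (mt G d)"
  using edge_cases[OF d] t2_false[OF d] by blast

lemma deg_all: assumes u: "u \<in> vx G" shows "3 \<le> card (outd G u)"
  using deg3[OF u] not2 by blast

lemma contra: False
proof -
  define Od where "Od = {d \<in> dt G. oddd (tv G d) d}"
  have finO: "finite Od" using finD unfolding Od_def by auto
  have inj: "inj_on (tv G) Od"
  proof (rule inj_onI)
    fix d1 d2 assume d: "d1 \<in> Od" "d2 \<in> Od" "tv G d1 = tv G d2"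
    show "d1 = d2"
    proof (rule ccontr)
      assume ne12: "d1 \<noteq> d2"
      define w where "w = tv G d1"
      have o1: "oddd w d1" "oddd w d2" using d unfolding Od_def w_def by auto
      have wV: "w \<in> vx G" using wfgD(3)[OF wf] d unfolding Od_def w_def by auto
      have "\<not> outd G w \<subseteq> {d1, d2}"
      proof
        assume "outd G w \<subseteq> {d1, d2}"
        then have "card (outd G w) \<le> card {d1, d2}" by (intro card_mono) auto
        also have "\<dots> \<le> 2" by (simp add: card_insert_if)
        finally show False using deg_all[OF wV] by simp
      qed
      then obtain d3 where d3: "d3 \<in> dt G" "tv G d3 = w" "d3 \<noteq> d1" "d3 \<noteq> d2" unfolding outd_def by auto
      obtain c1 where c1: "c1 \<noteq> cl G d1" "\<forall>d'\<in>dt G. tv G d' = w \<longrightarrow> d' \<noteq> d1 \<longrightarrow> cl G d' = c1"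
        using o1(1) unfolding oddd_def by blast
      obtain c2 where c2: "c2 \<noteq> cl G d2" "\<forall>d'\<in>dt G. tv G d' = w \<longrightarrow> d' \<noteq> d2 \<longrightarrow> cl G d' = c2"
        using o1(2) unfolding oddd_def by blast
      have "cl G d3 = c1" "cl G d3 = c2" using c1(2) c2(2) d3 by auto
      moreover have "cl G d1 = c2" using c2(2) o1(1) ne12 unfolding oddd_def by auto
      ultimately show False using c1(1) by simp
    qed
  qed
  have cO: "card Od \<le> card (vx G)"
    using card_inj_on_le[OF inj _ finV] wfgD(3)[OF wf] unfolding Od_def by auto
  have subO: "dt G \<subseteq> Od \<union> mt G ` Od"
  proof
    fix d assume d: "d \<in> dt G"
    show "d \<in> Od \<union> mt G ` Od"
    proof (cases "oddd (tv G d) d")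
      case True then show ?thesis using d unfolding Od_def by auto
    next
      case False
      then have "oddd (hv G d) (mt G d)" using all_odd[OF d] by simp
      then have "mt G d \<in> Od" using wfgD(1,7)[OF wf d] unfolding Od_def by simp
      then show ?thesis using wfgD(2)[OF wf d] by (metis UnI2 image_eqI)
    qed
  qed
  have "card (dt G) \<le> card (Od \<union> mt G ` Od)" using subO by (intro card_mono) (use finO in auto)
  also have "\<dots> \<le> card Od + card (mt G ` Od)" by (rule card_Un_le)
  also have "\<dots> \<le> card Od + card Od" using card_image_le[OF finO] by simp
  finally have A: "card (dt G) \<le> 2 * card (vx G)" using cO by simp
  have "dt G = (\<Union>w\<in>vx G. outd G w)" unfolding outd_def using wfgD(3)[OF wf] by auto
  moreover have "card (\<Union>w\<in>vx G. outd G w) = (\<Sum>w\<in>vx G. card (outd G w))"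
    by (rule card_UN_disjoint) (use finV finD in \<open>auto simp: outd_def\<close>)
  ultimately have B: "card (dt G) = (\<Sum>w\<in>vx G. card (outd G w))" by simp
  have "(\<Sum>w\<in>vx G. (3::nat)) \<le> (\<Sum>w\<in>vx G. card (outd G w))" by (rule sum_mono) (rule deg_all)
  then have "3 * card (vx G) \<le> card (dt G)" using B by simp
  then have "card (vx G) = 0" using A by simp
  then show False using finV ne by simp
qed

end

lemma wf_smaller: "wf {(H::('a,'d) mg, G). smaller H G}"
proof -
  have "{(H::('a,'d) mg, G). smaller H G} =
      inv_image (less_than <*lex*> less_than) (\<lambda>G. (card (vx G), card (dt G)))"
    unfolding smaller_def inv_image_def by auto
  then show ?thesis by (simp add: wf_lex_prod)
qed

theorem yeo_mg: assumes inf: "infinite (UNIV :: 'd set)" shows "goodg (G :: ('a,'d) mg)"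
proof (induction G rule: wf_induct[OF wf_smaller])
  case (1 G)
  show ?case unfolding goodg_def
  proof (intro impI, elim conjE)
    assume a: "wfg G" "vx G \<noteq> {}" "nopc G"
    show "\<exists>z\<in>vx G. sepv G z"
    proof (rule ccontr)
      assume "\<not> (\<exists>z\<in>vx G. sepv G z)"
      then interpret m: mce G by unfold_locales (use inf a 1 in auto)
      show False by (rule m.contra)
    qed
  qed
qed

lemma chain_conn:
  assumes "successively (lnk G) R" "R \<noteq> []" "\<And>r. r \<in> set R \<Longrightarrow> tv G r \<in> S" "set R \<subseteq> dt G"
  shows "conn G S (tv G (hd R)) (tv G (last R))"
  using assms
proof (induction R rule: induct_list012)
  case (3 x y zs)
  have "lnk G x y" using "3.prems"(1) by simp
  then have "adj G S (tv G x) (tv G y)" using "3.prems"(3,4) unfolding lnk_def adj_def by auto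
  moreover have "conn G S (tv G y) (tv G (last (y # zs)))"
    using "3.IH"(2) "3.prems" by (simp add: successively_Cons)
  ultimately show ?case by (simp add: converse_rtranclp_into_rtranclp)
qed auto

lemma pccyc_front2: assumes "wfg G" "pccyc G xs" "x \<in> set xs"
  shows "\<exists>R. pccyc G (x # R) \<and> set (x # R) = set xs"
proof -
  obtain A B where AB: "xs = A @ x # B" using split_list[OF assms(3)] by auto
  then have "pccyc G ((x # B) @ A)" using pccyc_rot[OF assms(1), of A "x # B"] assms(2) by simp
  moreover have "set ((x # B) @ A) = set xs" using AB by auto
  ultimately show ?thesis by (intro exI[of _ "B @ A"]) auto
qed

lemma ord_nocyc:
  assumes wf: "wfg G" and C: "pccyc G xs" and dv: "distinct vs" and sub: "tv G ` set xs \<subseteq> set vs"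
    and ord: "\<And>i d1 d2. i < length vs \<Longrightarrow> d1 \<in> dt G \<Longrightarrow> d2 \<in> dt G \<Longrightarrow> tv G d1 = vs ! i \<Longrightarrow>
      tv G d2 = vs ! i \<Longrightarrow> hv G d1 \<in> set (drop (Suc i) vs) \<Longrightarrow> hv G d2 \<in> set (drop (Suc i) vs) \<Longrightarrow>
      conn G (set (drop (Suc i) vs)) (hv G d1) (hv G d2) \<Longrightarrow> cl G d1 = cl G d2"
  shows False
proof -
  define I where "I = {i. i < length vs \<and> vs ! i \<in> tv G ` set xs}"
  have finI: "finite I" unfolding I_def by auto
  obtain d where "d \<in> set xs" using C unfolding pccyc_def by (cases xs) auto
  then obtain j where "j < length vs" "vs ! j = tv G d" using sub by (metis image_subset_iff in_set_conv_nth)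
  then have neI: "I \<noteq> {}" using \<open>d \<in> set xs\<close> unfolding I_def by auto
  define i0 where "i0 = Min I"
  have i0I: "i0 \<in> I" unfolding i0_def using neI finI by simp
  then obtain d0 where d0: "d0 \<in> set xs" "tv G d0 = vs ! i0" and i0l: "i0 < length vs" unfolding I_def by auto
  have mn: "i0 \<le> i" if "i \<in> I" for i unfolding i0_def using that finI by simp
  obtain R where C0: "pccyc G (d0 # R)" and setC: "set (d0 # R) = set xs" using pccyc_front2[OF wf C d0(1)] by blast
  define S where "S = set (drop (Suc i0) vs)"
  have Rne: "R \<noteq> []" using C0 unfolding pccyc_def by auto
  have dist: "tv G d0 \<notin> tv G ` set R" using C0 unfolding pccyc_def by auto
  have RS: "tv G r \<in> S" if "r \<in> set R" for r
  proof -
    have "tv G r \<in> set vs" using sub setC that by auto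
    then obtain j where j: "j < length vs" "vs ! j = tv G r" by (metis in_set_conv_nth)
    then have "j \<in> I" using setC that unfolding I_def by auto
    then have "i0 \<le> j" by (rule mn)
    moreover have "j \<noteq> i0" using j d0(2) dist that by auto
    ultimately have "Suc i0 \<le> j" by simp
    then have "drop (Suc i0) vs ! (j - Suc i0) = tv G r" "j - Suc i0 < length (drop (Suc i0) vs)"
      using j by auto
    then show ?thesis unfolding S_def by (metis nth_mem)
  qed
  have sR: "successively (lnk G) R" and l1: "lnk G d0 (hd R)" and l2: "lnk G (last R) d0"
    using C0 Rne unfolding pccyc_def by (auto simp: successively_Cons)
  have Rsub: "set R \<subseteq> dt G" and d0D: "d0 \<in> dt G" using C0 unfolding pccyc_def by auto
  have cR: "conn G S (tv G (hd R)) (tv G (last R))" by (rule chain_conn[OF sR Rne RS Rsub])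
  have lD: "last R \<in> dt G" using Rsub Rne by auto
  have ml: "mt G (last R) \<in> dt G" "tv G (mt G (last R)) = vs ! i0" "hv G (mt G (last R)) = tv G (last R)"
    using wfgD(1,6,7)[OF wf lD] l2 d0(2) unfolding lnk_def by auto
  have h0: "hv G d0 = tv G (hd R)" using l1 unfolding lnk_def by simp
  have inS: "tv G (hd R) \<in> S" "tv G (last R) \<in> S" using RS Rne by auto
  have "cl G d0 = cl G (mt G (last R))"
    using ord[OF i0l d0D ml(1) d0(2) ml(2)] h0 ml(3) inS cR unfolding S_def by simp
  then show False using l2 unfolding lnk_def by simp
qed

definition sgwf :: "'a set \<Rightarrow> ('a \<Rightarrow> 'a \<Rightarrow> bool) \<Rightarrow> ('a \<Rightarrow> 'a \<Rightarrow> nat) \<Rightarrow> bool" where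
  "sgwf V E col \<longleftrightarrow> finite V \<and> (\<forall>u v. E u v \<longrightarrow> u \<in> V \<and> v \<in> V) \<and> (\<forall>u v. E u v \<longrightarrow> E v u) \<and>
     (\<forall>u. \<not> E u u) \<and> (\<forall>u v. E u v \<longrightarrow> col u v = col v u)"

definition sg :: "'a set \<Rightarrow> ('a \<Rightarrow> 'a \<Rightarrow> bool) \<Rightarrow> ('a \<Rightarrow> 'a \<Rightarrow> nat) \<Rightarrow> ('a, ('a \<times> 'a) + nat) mg" where
  "sg V E col = \<lparr>vx = V, dt = Inl ` {(u,v). E u v}, tv = case_sum fst (\<lambda>_. undefined),
     mt = case_sum (\<lambda>(u,v). Inl (v,u)) Inr, cl = case_sum (\<lambda>(u,v). col u v) (\<lambda>_. 0)\<rparr>"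

lemma sg_simps[simp]: "vx (sg V E col) = V" "dt (sg V E col) = Inl ` {(u,v). E u v}"
  "tv (sg V E col) (Inl (a,b)) = a" "mt (sg V E col) (Inl (a,b)) = Inl (b,a)"
  "cl (sg V E col) (Inl (a,b)) = col a b" "hv (sg V E col) (Inl (a,b)) = b"
  unfolding sg_def hv_def by auto

lemma sg_dt: "d \<in> dt (sg V E col) \<longleftrightarrow> (\<exists>a b. d = Inl (a,b) \<and> E a b)" by auto

lemma sg_wf: assumes A: "sgwf V E col" shows "wfg (sg V E col)"
proof -
  have "{(u,v). E u v} \<subseteq> V \<times> V" using A unfolding sgwf_def by auto
  then have f: "finite {(u,v). E u v}" using A finite_subset unfolding sgwf_def by blast
  have "mt (sg V E col) d \<in> dt (sg V E col) \<and> mt (sg V E col) (mt (sg V E col) d) = d \<and>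
        tv (sg V E col) d \<in> vx (sg V E col) \<and> tv (sg V E col) (mt (sg V E col) d) \<noteq> tv (sg V E col) d"
    if D: "d \<in> dt (sg V E col)" for d
  proof -
    obtain a b where d: "d = Inl (a,b)" "E a b" using D by auto
    then show ?thesis using A unfolding sgwf_def by auto
  qed
  then show ?thesis unfolding wfg_def using f A unfolding sgwf_def by auto
qed

lemma sg_adj: "adj (sg V E col) S u w \<longleftrightarrow> E u w \<and> u \<in> S \<and> w \<in> S"
proof
  assume "adj (sg V E col) S u w"
  then obtain d where d: "d \<in> dt (sg V E col)" "tv (sg V E col) d = u" "hv (sg V E col) d = w" "u \<in> S" "w \<in> S"
    unfolding adj_def by blast
  then obtain a b where "d = Inl (a,b)" "E a b" by auto
  then show "E u w \<and> u \<in> S \<and> w \<in> S" using d by simp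
next
  assume A: "E u w \<and> u \<in> S \<and> w \<in> S"
  have "Inl (u,w) \<in> dt (sg V E col)" using A by simp
  then show "adj (sg V E col) S u w" unfolding adj_def using A by force
qed

lemma sg_conn: "conn (sg V E col) S = (\<lambda>x y. E x y \<and> x \<in> S \<and> y \<in> S)\<^sup>*\<^sup>*"
proof -
  have "adj (sg V E col) S = (\<lambda>x y. E x y \<and> x \<in> S \<and> y \<in> S)" by (intro ext) (simp only: sg_adj)
  then show ?thesis by simp
qed


lemma sg_dart_cases: assumes "d \<in> dt (sg V E col)"
  shows "d = Inl (tv (sg V E col) d, hv (sg V E col) d)" "E (tv (sg V E col) d) (hv (sg V E col) d)"
    "cl (sg V E col) d = col (tv (sg V E col) d) (hv (sg V E col) d)"
    "cl (sg V E col) (mt (sg V E col) d) = col (hv (sg V E col) d) (tv (sg V E col) d)"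
  using assms by auto

lemma sg_nopc: assumes A: "sgwf V E col" and nc: "\<not> has_pc_cycle E col" shows "nopc (sg V E col)"
  unfolding nopc_def
proof
  assume "\<exists>xs. pccyc (sg V E col) xs"
  then obtain xs where C: "pccyc (sg V E col) xs" by blast
  define G where "G = sg V E col"
  define k where "k = length xs"
  define a where "a i = tv G (xs ! i)" for i
  define b where "b i = hv G (xs ! i)" for i
  have k2: "2 \<le> k" using C unfolding pccyc_def k_def by simp
  have inD: "xs ! i \<in> dt G" if "i < k" for i using C that unfolding pccyc_def k_def G_def by auto
  have xi: "xs ! i = Inl (a i, b i)" "E (a i) (b i)" "cl G (xs ! i) = col (a i) (b i)"
    "cl G (mt G (xs ! i)) = col (b i) (a i)" if "i < k" for i
    using sg_dart_cases[OF inD[OF that, unfolded G_def]] unfolding a_def b_def G_def by auto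
  have sym: "col (a i) (b i) = col (b i) (a i)" if "i < k" for i using xi(2)[OF that] A unfolding sgwf_def by auto
  have succ: "b i = a (Suc i) \<and> col (b i) (a i) \<noteq> col (a (Suc i)) (b (Suc i))" if "Suc i < k" for i
  proof -
    have "lnk G (xs ! i) (xs ! Suc i)" using C that successively_nth unfolding pccyc_def k_def G_def by blast
    then show ?thesis using xi[of i] xi[of "Suc i"] that unfolding lnk_def a_def b_def by auto
  qed
  have wrap: "b (k - 1) = a 0 \<and> col (b (k - 1)) (a (k - 1)) \<noteq> col (a 0) (b 0)"
  proof -
    have ne: "xs \<noteq> []" using k2 unfolding k_def by auto
    have "lnk G (last xs) (hd xs)" using C unfolding pccyc_def G_def by simp
    moreover have "last xs = xs ! (k - 1)" "hd xs = xs ! 0" using ne unfolding k_def by (auto simp: last_conv_nth hd_conv_nth)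
    ultimately have "lnk G (xs ! (k - 1)) (xs ! 0)" by simp
    then show ?thesis using xi[of "k - 1"] xi[of 0] k2 unfolding lnk_def a_def b_def by auto
  qed
  have k3: "3 \<le> k"
  proof (rule ccontr)
    assume "\<not> 3 \<le> k"
    then have k2': "k = 2" using k2 by simp
    have "xs ! 1 = Inl (a 1, b 1)" "xs ! 0 = Inl (a 0, b 0)" using xi k2' by auto
    moreover have "a 1 = b 0" using succ[of 0] k2' by simp
    moreover have "b 1 = a 0" using wrap k2' by simp
    ultimately have "xs ! 1 = mt G (xs ! 0)" unfolding G_def by simp
    then show False using C k2' unfolding pccyc_def k_def G_def by simp
  qed
  define ws where "ws = map (tv G) xs @ [tv G (xs ! 0)]"
  have lws: "length ws = Suc k" unfolding ws_def k_def by simp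
  have wsa: "ws ! i = a i" if "i < k" for i using that unfolding ws_def a_def k_def by (simp add: nth_append)
  have wsk: "ws ! k = a 0" unfolding ws_def a_def k_def by (simp add: nth_append)
  have wsb: "ws ! Suc i = b i" if "i < k" for i
  proof (cases "Suc i < k")
    case True then show ?thesis using wsa succ by simp
  next
    case False then have "Suc i = k" using that by simp
    then show ?thesis using wsk wrap by (metis diff_Suc_1)
  qed
  have "is_pc_cycle E col ws"
    unfolding is_pc_cycle_def is_walk_def
  proof (intro conjI allI impI)
    show "ws \<noteq> []" unfolding ws_def by simp
    show "4 \<le> length ws" using lws k3 by simp
    fix i
    { assume "Suc i < length ws"
      then have "i < k" using lws by simp
      then show "E (ws ! i) (ws ! Suc i)" using wsa wsb xi by simp }
    { assume "i + 2 < length ws"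
      then have i: "Suc i < k" using lws by simp
      have w2: "ws ! Suc (Suc i) = b (Suc i)" using wsb i by simp
      have s1: "b i = a (Suc i)" and s2: "col (b i) (a i) \<noteq> col (a (Suc i)) (b (Suc i))" using succ[OF i] by auto
      have "col (a i) (b i) \<noteq> col (b i) (b (Suc i))" using s2 sym[of i] i unfolding s1 by simp
      then show "col (ws ! i) (ws ! Suc i) \<noteq> col (ws ! Suc i) (ws ! Suc (Suc i))"
        using wsa[of i] wsb[of i] w2 i by simp }
  next
    have "xs \<noteq> []" using k3 unfolding k_def by auto
    then show "hd ws = last ws" unfolding ws_def by (cases xs) auto
    have "butlast ws = map (tv G) xs" unfolding ws_def by simp
    then show "distinct (butlast ws)" using C unfolding pccyc_def G_def by simp
    have "length ws - 2 = k - 1" "length ws - 1 = k" using lws by auto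
    moreover have "ws ! (k - 1) = a (k - 1)" "ws ! 0 = a 0" "ws ! 1 = b 0" using wsa wsb[of 0] k3 by auto
    moreover have w1: "b (k - 1) = a 0" and w2: "col (b (k - 1)) (a (k - 1)) \<noteq> col (a 0) (b 0)" using wrap by auto
    moreover have "col (a (k - 1)) (b (k - 1)) \<noteq> col (a 0) (b 0)" using w2 sym[of "k - 1"] k3 by simp
    ultimately show "col (ws ! (length ws - 2)) (ws ! (length ws - 1)) \<noteq> col (ws ! 0) (ws ! 1)"
      using wsk by (simp only:) (metis)
  qed
  then show False using nc unfolding has_pc_cycle_def by blast
qed

lemma sg_sep: assumes "sepv (sg V E col) z" "same_component E (V - {z}) u w" "E z u" "E z w"
  shows "col z u = col z w"
proof -
  have "Inl (z,u) \<in> dt (sg V E col)" "Inl (z,w) \<in> dt (sg V E col)" using assms by auto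
  moreover have "conn (sg V E col) (vx (sg V E col) - {z}) u w"
    using assms(2) unfolding same_component_def sg_conn by simp
  ultimately show ?thesis using sepvD[OF assms(1), of "Inl (z,u)" "Inl (z,w)"] by simp
qed

lemma simple_to_dart:
  assumes A: "sgwf V E col" and P: "is_pc_cycle E col ws"
  shows "pccyc (sg V E col) (map (\<lambda>i. Inl (ws ! i, ws ! Suc i)) [0..<length ws - 1])"
proof -
  define n where "n = length ws"
  define k where "k = n - 1"
  define f where "f i = (Inl (ws ! i, ws ! Suc i) :: ('a \<times> 'a) + nat)" for i
  define xs where "xs = map f [0..<k]"
  define G where "G = sg V E col"
  have n4: "4 \<le> n" using P unfolding is_pc_cycle_def n_def by simp
  have walk: "E (ws ! i) (ws ! Suc i)" if "i < k" for i
    using P that unfolding is_pc_cycle_def is_walk_def k_def n_def by auto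
  have sym: "col (ws ! Suc i) (ws ! i) = col (ws ! i) (ws ! Suc i)" if "i < k" for i
    using walk[OF that] A unfolding sgwf_def by auto
  have pc: "col (ws ! i) (ws ! Suc i) \<noteq> col (ws ! Suc i) (ws ! Suc (Suc i))" if "Suc i < k" for i
    using P that unfolding is_pc_cycle_def k_def n_def by auto
  have lx: "length xs = k" unfolding xs_def by simp
  have xn: "xs ! i = f i" if "i < k" for i using that unfolding xs_def by simp
  have "pccyc G xs"
    unfolding pccyc_def
  proof (intro conjI)
    show "2 \<le> length xs" using lx n4 unfolding k_def by simp
    show "set xs \<subseteq> dt G" unfolding xs_def G_def f_def using walk by auto
    have "map (tv G) xs = butlast ws"
    proof (rule nth_equalityI)
      show "length (map (tv G) xs) = length (butlast ws)" using lx unfolding k_def n_def by simp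
      fix i assume "i < length (map (tv G) xs)"
      then have i: "i < k" using lx by simp
      have "map (tv G) xs ! i = tv G (xs ! i)" using i lx by simp
      then show "map (tv G) xs ! i = butlast ws ! i" using xn[OF i] i unfolding G_def f_def k_def n_def
        by (simp add: nth_butlast)
    qed
    then show "distinct (map (tv G) xs)" using P unfolding is_pc_cycle_def by simp
    show "successively (lnk G) xs"
      unfolding successively_conv_nth
    proof (intro allI impI)
      fix i assume i: "Suc i < length xs"
      then have i': "Suc i < k" "i < k" using lx by auto
      show "lnk G (xs ! i) (xs ! Suc i)"
        unfolding xn[OF i'(2)] xn[OF i'(1)] lnk_def G_def f_def using pc[OF i'(1)] sym[OF i'(2)] by simp
    qed
    have ne: "xs \<noteq> []" using lx n4 unfolding k_def by auto
    have lh: "last xs = f (k - 1)" "hd xs = f 0" using ne lx xn n4 unfolding k_def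
      by (auto simp: last_conv_nth hd_conv_nth)
    have e1: "ws ! k = ws ! 0"
    proof -
      have wne: "ws \<noteq> []" using n4 unfolding n_def by auto
      have "ws ! k = last ws" "ws ! 0 = hd ws" using last_conv_nth[OF wne] hd_conv_nth[OF wne]
        unfolding k_def n_def by auto
      then show ?thesis using P unfolding is_pc_cycle_def by simp
    qed
    have k1: "Suc (k - 1) = k" using n4 unfolding k_def by simp
    have lastpc: "col (ws ! (k - 1)) (ws ! k) \<noteq> col (ws ! 0) (ws ! 1)"
      using P n4 unfolding is_pc_cycle_def k_def n_def by (simp add: numeral_2_eq_2)
    have "col (ws ! k) (ws ! (k - 1)) = col (ws ! (k - 1)) (ws ! k)" using sym[of "k - 1"] k1 n4
      unfolding k_def by simp
    then show "lnk G (last xs) (hd xs)" unfolding lh lnk_def G_def f_def using e1 k1 lastpc by simp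
    have "length xs \<noteq> 2" using lx n4 unfolding k_def by simp
    then show "length xs = 2 \<longrightarrow> xs ! 1 \<noteq> mt G (xs ! 0)" by blast
  qed
  then show ?thesis unfolding xs_def f_def G_def k_def n_def .
qed


lemma dir1: assumes A: "sgwf V E col" and O: "type1_ordering V E col vs" shows "\<not> has_pc_cycle E col"
proof
  assume "has_pc_cycle E col"
  then obtain ws where P: "is_pc_cycle E col ws" unfolding has_pc_cycle_def by blast
  define xs where "xs = map (\<lambda>i. Inl (ws ! i, ws ! Suc i) :: ('a \<times> 'a) + nat) [0..<length ws - 1]"
  have C: "pccyc (sg V E col) xs" unfolding xs_def by (rule simple_to_dart[OF A P])
  have dv: "distinct vs" "set vs = V" using O unfolding type1_ordering_def by auto
  show False
  proof (rule ord_nocyc[OF sg_wf[OF A] C dv(1)])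
    show "tv (sg V E col) ` set xs \<subseteq> set vs"
    proof
      fix w assume "w \<in> tv (sg V E col) ` set xs"
      then obtain i where i: "i < length ws - 1" "w = ws ! i" unfolding xs_def by auto
      have "E (ws ! i) (ws ! Suc i)" using P i unfolding is_pc_cycle_def is_walk_def by auto
      then show "w \<in> set vs" using A i dv unfolding sgwf_def by auto
    qed
    fix i d1 d2 assume i: "i < length vs" and d: "d1 \<in> dt (sg V E col)" "d2 \<in> dt (sg V E col)"
      "tv (sg V E col) d1 = vs ! i" "tv (sg V E col) d2 = vs ! i"
      "hv (sg V E col) d1 \<in> set (drop (Suc i) vs)" "hv (sg V E col) d2 \<in> set (drop (Suc i) vs)"
      and c: "conn (sg V E col) (set (drop (Suc i) vs)) (hv (sg V E col) d1) (hv (sg V E col) d2)"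
    note c1 = sg_dart_cases[OF d(1)] and c2 = sg_dart_cases[OF d(2)]
    have "same_component E (set (drop (Suc i) vs)) (hv (sg V E col) d1) (hv (sg V E col) d2)"
      using c d unfolding same_component_def sg_conn by simp
    then have "col (vs ! i) (hv (sg V E col) d1) = col (vs ! i) (hv (sg V E col) d2)"
      using O i c1(2) c2(2) d(3,4) unfolding type1_ordering_def by metis
    then show "cl (sg V E col) d1 = cl (sg V E col) d2" using c1(3) c2(3) d(3,4) by simp
  qed
qed

lemma inf_dart: "infinite (UNIV :: (('a \<times> 'a) + nat) set)" by simp

lemma dir2: "sgwf V E col \<Longrightarrow> \<not> has_pc_cycle E col \<Longrightarrow> \<exists>vs. type1_ordering V E col vs"
proof (induction "card V" arbitrary: V E rule: less_induct)
  case less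
  show ?case
  proof (cases "V = {}")
    case True
    then have "type1_ordering V E col []" unfolding type1_ordering_def by simp
    then show ?thesis by blast
  next
    case False
    have g: "goodg (sg V E col)" by (rule yeo_mg[OF inf_dart])
    obtain z where z: "z \<in> V" "sepv (sg V E col) z"
      using g sg_wf[OF less.prems(1)] sg_nopc[OF less.prems] False unfolding goodg_def by auto
    define E' where "E' = (\<lambda>a b. E a b \<and> a \<noteq> z \<and> b \<noteq> z)"
    have w': "sgwf (V - {z}) E' col" using less.prems(1) unfolding sgwf_def E'_def by auto
    have nc': "\<not> has_pc_cycle E' col"
    proof
      assume "has_pc_cycle E' col"
      then obtain ws where "is_pc_cycle E' col ws" unfolding has_pc_cycle_def by blast
      then have "is_pc_cycle E col ws" unfolding is_pc_cycle_def is_walk_def E'_def by auto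
      then show False using less.prems(2) unfolding has_pc_cycle_def by blast
    qed
    have "card (V - {z}) < card V" using z(1) less.prems(1) unfolding sgwf_def
      by (meson card_Diff1_less)
    then obtain vs' where O': "type1_ordering (V - {z}) E' col vs'" using less.hyps[OF _ w' nc'] by blast
    have d': "distinct vs'" "set vs' = V - {z}" using O' unfolding type1_ordering_def by auto
    have "type1_ordering V E col (z # vs')"
      unfolding type1_ordering_def
    proof (intro conjI allI impI)
      show "distinct (z # vs')" using d' by simp
      show "set (z # vs') = V" using d' z(1) by auto
      fix i u w assume i: "i < length (z # vs')"
        and sc: "same_component E (set (drop (Suc i) (z # vs'))) u w"
        and e: "E ((z # vs') ! i) u" "E ((z # vs') ! i) w"
      show "col ((z # vs') ! i) u = col ((z # vs') ! i) w"
      proof (cases i)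
        case 0
        then show ?thesis using sg_sep[OF z(2), of u w] sc e d'(2) by simp
      next
        case (Suc j)
        define S where "S = set (drop (Suc j) vs')"
        have j: "j < length vs'" using i Suc by simp
        have SV: "S \<subseteq> V - {z}" unfolding S_def using set_drop_subset[of "Suc j" vs'] d'(2) by simp
        have sc': "same_component E S u w" using sc Suc unfolding S_def by simp
        have "(\<lambda>x y. E x y \<and> x \<in> S \<and> y \<in> S) \<le> (\<lambda>x y. E' x y \<and> x \<in> S \<and> y \<in> S)"
          using SV unfolding E'_def by auto
        then have "same_component E' S u w" using sc' unfolding same_component_def
          by (meson rtranclp_mono predicate2D)
        moreover have "vs' ! j \<in> V - {z}" using j d'(2) nth_mem by blast
        moreover have "u \<in> S" "w \<in> S" using sc' unfolding same_component_def by auto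
        moreover have key: "\<forall>u w. same_component E' S u w \<longrightarrow> E' (vs' ! j) u \<longrightarrow> E' (vs' ! j) w \<longrightarrow>
            col (vs' ! j) u = col (vs' ! j) w" using O' j unfolding type1_ordering_def S_def by blast
        moreover have "E (vs' ! j) u" "E (vs' ! j) w" using e Suc by auto
        ultimately have "col (vs' ! j) u = col (vs' ! j) w" using SV unfolding E'_def by blast
        then show ?thesis using Suc by simp
      qed
    qed
    then show ?thesis by blast
  qed
qed

theorem corollary1:
  fixes c :: nat and V :: "'a set" and E :: "'a \<Rightarrow> 'a \<Rightarrow> bool" and col :: "'a \<Rightarrow> 'a \<Rightarrow> nat"
  assumes "c \<ge> 2" and "edge_colored_graph c V E col"
  shows "pc_acyclic_type1 V E col \<longleftrightarrow> \<not> has_pc_cycle E col"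
proof -
  have A: "sgwf V E col" using assms(2) unfolding edge_colored_graph_def sgwf_def by auto
  show ?thesis unfolding pc_acyclic_type1_def using dir1[OF A] dir2[OF A] by blast
qed

end
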